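(* Let $H$ be a real Hilbert space, $A$ a strictly positive selfadjoint operator on $H$ with $\lambda_1>0$ the minimum of its spectrum, $\alpha,\beta,\gamma,\kappa>0$ with $\mu=\gamma-\alpha\beta\ge0$, and $\eta\in\mathbb R$ with $\eta^2>\mathfrak t(\kappa)\mu$, where $$\mathfrak t(\kappa)=\begin{cases}\frac{2\kappa}{\alpha^2}\big(1-\frac{\alpha}{\kappa\lambda_1}+\frac{\alpha^2}{\kappa^2\lambda_1^2}\big)&\kappa<\alpha/\lambda_1,\\ \frac{2\kappa}{\alpha^2}&\kappa\ge\alpha/\lambda_1.\end{cases}$$ For solutions $(u,\theta)$ of $u_{ttt}+\alpha u_{tt}+\beta A u_t+\gamma A u=\eta A\theta$, $\theta_t+\kappa A\theta=-\eta A u_{tt}-\alpha\eta A u_t$, define $$\mathsf W=\frac{\gamma}{\alpha}\|u_t+\alpha u\|_1^2+\|u_{tt}+\alpha u_t\|^2-\frac{\mu}{\alpha}\|u_t\|_1^2+\|\theta\|^2,$$ $$\mathsf F=\eta\langle\theta,u_t\rangle+\frac{\eta^2}{2}\|u_t\|_1^2+\frac12\|\theta\|_{-1}^2,\qquad \mathsf G=-\langle u_t-\alpha u,u_{tt}+\alpha u_t\rangle,$$ $\mathsf L=\mathsf W+\rho\mathsf F+\varepsilon^2\mathsf G$ for $\rho,\varepsilon>0$, and $\mathcal E=\frac12[\|u_t+\alpha u\|_1^2+\|u_{tt}+\alpha u_t\|^2+\|u_t\|_1^2+\|\theta\|^2]$. Then there exists $\rho>0$ with the following property: for every $\varepsilon>0$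 sufficiently small there is $\omega=\omega(\varepsilon)>0$ such that $\frac{d}{dt}\mathsf L+\omega\mathcal E\le0$ along every sufficiently regular solution.
   Context: $\|u\|_\sigma=\|A^{\sigma/2}u\|$ for $\sigma\in\mathbb R$; "sufficiently regular solution" means e.g. one with initial datum in the domain of the generator of the solution semigroup on $H^1\times H^1\times H\times H$. *)

theory Defs
  imports "HOL-Analysis.Analysis"
begin

text \<open>Unbounded linear operators on a real Hilbert space are represented as a pair
  (domain D, map T), the values of T outside D being irrelevant.\<close>

definition linear_op :: "'h::real_inner set \<Rightarrow> ('h \<Rightarrow> 'h) \<Rightarrow> bool" where
  "linear_op D T \<longleftrightarrow> subspace D \<and>
     (\<forall>x\<in>D. \<forall>y\<in>D. T (x + y) = T x + T y) \<and> (\<forall>c. \<forall>x\<in>D. T (c *\<^sub>R x) = c *\<^sub>R T x)"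

text \<open>Selfadjoint: densely defined, symmetric, and the domain of the adjoint is contained
  in D (hence the adjoint equals T).\<close>
definition selfadjoint_op :: "'h::real_inner set \<Rightarrow> ('h \<Rightarrow> 'h) \<Rightarrow> bool" where
  "selfadjoint_op D T \<longleftrightarrow> linear_op D T \<and> closure D = UNIV \<and>
     (\<forall>x\<in>D. \<forall>y\<in>D. inner (T x) y = inner x (T y)) \<and>
     (\<forall>y z. (\<forall>x\<in>D. inner (T x) y = inner x z) \<longrightarrow> y \<in> D)"

definition strictly_positive_op :: "'h::real_inner set \<Rightarrow> ('h \<Rightarrow> 'h) \<Rightarrow> bool" where
  "strictly_positive_op D T \<longleftrightarrow> (\<forall>x\<in>D. x \<noteq> 0 \<longrightarrow> inner (T x) x > 0)"

definition positive_op :: "'h::real_inner set \<Rightarrow> ('h \<Rightarrow> 'h) \<Rightarrow> bool" where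
  "positive_op D T \<longleftrightarrow> (\<forall>x\<in>D. inner (T x) x \<ge> 0)"

definition op_spectrum :: "'h::real_inner set \<Rightarrow> ('h \<Rightarrow> 'h) \<Rightarrow> real set" where
  "op_spectrum D T = {l. \<not> (bij_betw (\<lambda>x. T x - l *\<^sub>R x) D UNIV \<and>
       (\<exists>C. \<forall>x\<in>D. norm x \<le> C * norm (T x - l *\<^sub>R x)))}"

text \<open>Inverse of an operator (used for A^(-1/2) = inverse of A^(1/2)).\<close>
definition op_inv :: "'h set \<Rightarrow> ('h \<Rightarrow> 'h) \<Rightarrow> 'h \<Rightarrow> 'h" where
  "op_inv D T y = (THE x. x \<in> D \<and> T x = y)"

definition tfun :: "real \<Rightarrow> real \<Rightarrow> real \<Rightarrow> real" where
  "tfun \<alpha> l1 \<kappa> = (if \<kappa> < \<alpha> / l1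
      then 2 * \<kappa> / \<alpha>\<^sup>2 * (1 - \<alpha> / (\<kappa> * l1) + \<alpha>\<^sup>2 / (\<kappa>\<^sup>2 * l1\<^sup>2))
      else 2 * \<kappa> / \<alpha>\<^sup>2)"

text \<open>Sufficiently regular (classical) solution on [0,oo): state (u, v = u_t, w = u_tt, th)
  stays in the domain of the generator, u and v are differentiable in H^1 (norm of S = A^(1/2)),
  w and th in H, and the equations hold, with A applied to the combinations lying in D(A).\<close>
definition regular_solution ::
  "'h::real_inner set \<Rightarrow> ('h \<Rightarrow> 'h) \<Rightarrow> 'h set \<Rightarrow> ('h \<Rightarrow> 'h) \<Rightarrow> real \<Rightarrow> real \<Rightarrow> real \<Rightarrow> real \<Rightarrow> real
    \<Rightarrow> (real \<Rightarrow> 'h) \<Rightarrow> (real \<Rightarrow> 'h) \<Rightarrow> (real \<Rightarrow> 'h) \<Rightarrow> (real \<Rightarrow> 'h) \<Rightarrow> bool" where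
  "regular_solution DA A DS S \<alpha> \<beta> \<gamma> \<kappa> \<eta> u v w th \<longleftrightarrow> (\<forall>t\<ge>0.
     u t \<in> DS \<and> v t \<in> DS \<and> w t \<in> DS \<and>
     \<beta> *\<^sub>R v t + \<gamma> *\<^sub>R u t - \<eta> *\<^sub>R th t \<in> DA \<and>
     \<kappa> *\<^sub>R th t + \<eta> *\<^sub>R w t + (\<alpha> * \<eta>) *\<^sub>R v t \<in> DA \<and>
     (u has_vector_derivative v t) (at t within {0..}) \<and>
     ((\<lambda>s. S (u s)) has_vector_derivative S (v t)) (at t within {0..}) \<and>
     (v has_vector_derivative w t) (at t within {0..}) \<and>
     ((\<lambda>s. S (v s)) has_vector_derivative S (w t)) (at t within {0..}) \<and>
     (w has_vector_derivative
        (- (\<alpha> *\<^sub>R w t) - A (\<beta> *\<^sub>R v t + \<gamma> *\<^sub>R u t - \<eta> *\<^sub>R th t))) (at t within {0..}) \<and>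
     (th has_vector_derivative
        (- A (\<kappa> *\<^sub>R th t + \<eta> *\<^sub>R w t + (\<alpha> * \<eta>) *\<^sub>R v t))) (at t within {0..}))"

definition Wfun :: "('h::real_inner \<Rightarrow> 'h) \<Rightarrow> real \<Rightarrow> real \<Rightarrow> real \<Rightarrow> 'h \<Rightarrow> 'h \<Rightarrow> 'h \<Rightarrow> 'h \<Rightarrow> real" where
  "Wfun S \<alpha> \<beta> \<gamma> x v w th =
     \<gamma> / \<alpha> * (norm (S (v + \<alpha> *\<^sub>R x)))\<^sup>2 + (norm (w + \<alpha> *\<^sub>R v))\<^sup>2
     - (\<gamma> - \<alpha> * \<beta>) / \<alpha> * (norm (S v))\<^sup>2 + (norm th)\<^sup>2"

definition Ffun :: "'h::real_inner set \<Rightarrow> ('h \<Rightarrow> 'h) \<Rightarrow> real \<Rightarrow> 'h \<Rightarrow> 'h \<Rightarrow> real" where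
  "Ffun DS S \<eta> v th = \<eta> * inner th v + \<eta>\<^sup>2 / 2 * (norm (S v))\<^sup>2
     + 1 / 2 * (norm (op_inv DS S th))\<^sup>2"

definition Gfun :: "real \<Rightarrow> 'h::real_inner \<Rightarrow> 'h \<Rightarrow> 'h \<Rightarrow> real" where
  "Gfun \<alpha> x v w = - inner (v - \<alpha> *\<^sub>R x) (w + \<alpha> *\<^sub>R v)"

definition Lfun :: "'h::real_inner set \<Rightarrow> ('h \<Rightarrow> 'h) \<Rightarrow> real \<Rightarrow> real \<Rightarrow> real \<Rightarrow> real \<Rightarrow> real \<Rightarrow> real
    \<Rightarrow> 'h \<Rightarrow> 'h \<Rightarrow> 'h \<Rightarrow> 'h \<Rightarrow> real" where
  "Lfun DS S \<alpha> \<beta> \<gamma> \<eta> \<rho> \<epsilon> x v w th =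
     Wfun S \<alpha> \<beta> \<gamma> x v w th + \<rho> * Ffun DS S \<eta> v th + \<epsilon>\<^sup>2 * Gfun \<alpha> x v w"

definition Efun :: "('h::real_inner \<Rightarrow> 'h) \<Rightarrow> real \<Rightarrow> 'h \<Rightarrow> 'h \<Rightarrow> 'h \<Rightarrow> 'h \<Rightarrow> real" where
  "Efun S \<alpha> x v w th = 1 / 2 * ((norm (S (v + \<alpha> *\<^sub>R x)))\<^sup>2 + (norm (w + \<alpha> *\<^sub>R v))\<^sup>2
     + (norm (S v))\<^sup>2 + (norm th)\<^sup>2)"

end

theory Submission
  imports Defs
begin

lemma polyI:
  fixes s :: real assumes "1 \<le> s" "s \<le> 5/2"
  shows "(15/8) * (1 - s/4)^2 * (1 - s + s^2) \<ge> 1"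
proof -
  define r where "r = s - 1"
  have r: "0 \<le> r" "r \<le> 3/2" using assms r_def by auto
  have s: "s = r + 1" using r_def by simp
  have key: "15*r^2*((r-1)*(4-r)) \<le> 7 + 45*r"
  proof (cases "r \<le> 1")
    case True
    then have "(r-1)*(4-r) \<le> 0" using r by (intro mult_nonpos_nonneg) auto
    then have "15*r^2*((r-1)*(4-r)) \<le> 0" by (simp add: mult_nonneg_nonpos)
    then show ?thesis using r by linarith
  next
    case False
    have "r*r \<le> 3/2*(3/2)" using r by (intro mult_mono) auto
    then have a: "r^2 \<le> 9/4" by (simp add: power2_eq_square)
    have b: "(r-1)*(4-r) \<le> 1/2 * 3" using False r by (intro mult_mono) auto
    have "r^2*((r-1)*(4-r)) \<le> 9/4 * (1/2*3)"
      using a b False r by (intro mult_mono) auto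
    then show ?thesis using False by linarith
  qed
  have gen: "\<And>(X::real) (K::real) (a::real). 128*(X-1) = a - K \<Longrightarrow> K \<le> a \<Longrightarrow> 1 \<le> X" by argo
  define X where "X = (15/8) * (1 - s/4)^2 * (1 - s + s^2)"
  have "128*(X - 1) = 7 + 45*r - 15*r^2*((r-1)*(4-r))"
    unfolding s X_def by algebra
  then have "X \<ge> 1" using key
    by (rule gen)
  then show ?thesis unfolding X_def .
qed

lemma polyII:
  fixes s :: real assumes "5/2 \<le> s"
  shows "(2 * s * (s - 1) * (7/5 * s + 3/5) - 2 * (7/5 * s + 3/5) - s^2 * (s - 1)) * (s^2 - s + 1) - s^2 * (s - 1)^2 * (7/5 * s + 3/5) \<ge> 0"
proof -
  define r where "r = s - 5/2"
  have r: "0 \<le> r" using assms r_def by auto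
  have s: "s = r + 5/2" using r_def by simp
  have "(2 * s * (s - 1) * (7/5 * s + 3/5) - 2 * (7/5 * s + 3/5) - s^2 * (s - 1)) * (s^2 - s + 1) - s^2 * (s - 1)^2 * (7/5 * s + 3/5)
     = 197/40 + 1483/40*r + 431/10*r^2 + 106/5*r^3 + 24/5*r^4 + 2/5*r^5"
    unfolding s by algebra 
  also have "\<dots> \<ge> 0" using r by (simp add: add_nonneg_nonneg)
  finally show ?thesis .
qed

lemma key_rho:
  fixes \<alpha> \<kappa> l1 \<mu> e :: real
  assumes a: "\<alpha> > 0" and k: "\<kappa> > 0" and l: "l1 > 0" and mu: "\<mu> \<ge> 0" and e: "e > 0"
    and hyp: "e^2 > tfun \<alpha> l1 \<kappa> * \<mu>"
  shows "\<exists>\<rho> x y. \<rho> > 0 \<and> 0 < x \<and> x < 2 \<and> x + max y 0 < 2 \<and> \<rho>*\<kappa> + y*\<kappa>*l1 > 0 \<and>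
     \<rho>*\<alpha>*e^2 - 2*\<mu> - \<rho>^2*e^2*\<kappa>/(4*x) - \<rho>^2*\<alpha>^2*e^2/(4*(\<rho>*\<kappa>+y*\<kappa>*l1)*l1) > 0"
proof -
  define s where "s = \<alpha>/(\<kappa>*l1)"
  have s0: "s > 0" using a k l by (simp add: s_def)
  have as: "\<alpha> = s*\<kappa>*l1" using k l by (simp add: s_def)
  define m where "m = (if s > 1 then 1 - s + s^2 else 1)"
  define K where "K = \<kappa>*l1^2*e^2"
  have K0: "K > 0" using k l e by (simp add: K_def)
  have m0: "m > 0" using s0 unfolding m_def
    by (smt (verit, best) mult_le_cancel_right1 power2_eq_square)
  have t: "tfun \<alpha> l1 \<kappa> = 2*\<kappa>/\<alpha>^2 * m"
  proof -
    have c: "(\<kappa> < \<alpha>/l1) = (s > 1)" unfolding s_def using k l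
      by (simp add: field_simps)
    show ?thesis unfolding tfun_def m_def c using k l a
      by (simp add: s_def field_simps power2_eq_square)
  qed
  have hK: "s^2*K > 2*m*\<mu>"
  proof -
    have "e^2 > 2*\<kappa>/\<alpha>^2 * m * \<mu>" using hyp t by simp
    then have "e^2 * (\<alpha>^2/\<kappa>) > 2*\<kappa>/\<alpha>^2 * m * \<mu> * (\<alpha>^2/\<kappa>)"
      using a k by (intro mult_strict_right_mono) auto
    also have "2*\<kappa>/\<alpha>^2 * m * \<mu> * (\<alpha>^2/\<kappa>) = 2*m*\<mu>" using a k by (simp add: field_simps)
    also have "e^2 * (\<alpha>^2/\<kappa>) = s^2*K" unfolding K_def as using k l
      by (simp add: field_simps power2_eq_square)
    finally show ?thesis .
  qed
  show ?thesis
  proof (cases "s \<le> 5/2")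
    case True
    define g where "g = (15/8)*(1-s/4)^2"
    have g0: "g > 0" using True by (simp add: g_def)
    have mg: "m*g \<ge> 1"
    proof (cases "s > 1")
      case True2: True
      then show ?thesis using polyI[of s] True True2 by (simp add: m_def g_def mult.commute mult.left_commute)
    next
      case False
      have "3/4 \<le> 1 - s/4" using False by simp
      then have "(3/4)^2 \<le> (1-s/4)^2" by (intro power_mono) auto
      then show ?thesis using False by (simp add: m_def g_def power2_eq_square)
    qed
    define \<rho> where "\<rho> = (15/4)*(1-s/4)* s*l1"
    have r0: "\<rho> > 0" using True s0 l by (simp add: \<rho>_def)
    have eq: "\<rho>*\<alpha>*e^2 - 2*\<mu> - \<rho>^2*e^2*\<kappa>/(4*(15/8)) - \<rho>^2*\<alpha>^2*e^2/(4*(\<rho>*\<kappa>+0*\<kappa>*l1)*l1)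
       = s^2*K*g - 2*\<mu>"
      using r0 k l s0 True unfolding as K_def g_def \<rho>_def by (simp add: field_simps power2_eq_square)
    have "s^2*K*g > 2*m*\<mu>*g" using hK g0 by (intro mult_strict_right_mono) auto
    moreover have "2*m*\<mu>*g \<ge> 2*\<mu>" using mg mu
      by (metis mult.assoc mult.commute mult_left_mono mult_cancel_left1 mult_le_cancel_left_pos zero_less_numeral)
    ultimately have "s^2*K*g - 2*\<mu> > 0" by linarith
    then show ?thesis using r0 k l eq
      by (intro exI[of _ \<rho>] exI[of _ "15/8"] exI[of _ 0]) auto
  next
    case False
    define B where "B = 7/5 * s + 3/5"
    have B0: "B > 0" using s0 by (simp add: B_def)
    have s1: "s - 1 > 0" using False by simp
    define c where "c = s - 1"
    have c0: "c > 0" using s1 c_def by simp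
    define br where "br = 2 * s/c - 2/c^2 - s^2/(c*B)"
    define X where "X = c^2*B"
    have X0: "X > 0" using c0 B0 by (simp add: X_def)
    have P: "(2 * s * c * B - 2 * B - s^2 * c) * (s^2 - s + 1) - s^2 * X \<ge> 0"
      using polyII[of s] False by (simp add: B_def c_def X_def)
    have brX: "br * X = 2 * s * c * B - 2 * B - s^2 * c"
      unfolding br_def X_def using c0 B0 by (simp add: field_simps power2_eq_square)
    have m_eq: "m = s^2 - s + 1" using False by (simp add: m_def)
    have "s^2 * X \<le> br * m * X"
    proof -
      have "br * m * X = (br * X) * m" by (simp add: mult_ac)
      then show ?thesis using P unfolding brX m_eq by linarith
    qed
    then have brm: "s^2 \<le> br * m" using X0 by (simp add: mult_le_cancel_right_pos)
    define \<rho> where "\<rho> = 2*l1/c"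
    have r0: "\<rho> > 0" using c0 l by (simp add: \<rho>_def)
    have d: "\<rho>*\<kappa>+7/5*\<kappa>*l1 = \<kappa>*l1*B/c"
      unfolding \<rho>_def B_def c_def using s1 by (simp add: field_simps)
    have T1: "\<rho>*\<alpha>*e^2 = K*(2 * s/c)" unfolding \<rho>_def as K_def using c0
      by (simp add: field_simps power2_eq_square)
    have T2: "\<rho>^2*e^2*\<kappa>/(4*(1/2)) = K*(2/c^2)" unfolding \<rho>_def K_def using c0
      by (simp add: field_simps power2_eq_square)
    have T3: "\<rho>^2*\<alpha>^2*e^2/(4*(\<rho>*\<kappa>+7/5*\<kappa>*l1)*l1) = K*(s^2/(c*B))"
      unfolding d unfolding \<rho>_def as K_def using c0 B0 k l
      by (simp add: field_simps power2_eq_square)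
    have eq: "\<rho>*\<alpha>*e^2 - 2*\<mu> - \<rho>^2*e^2*\<kappa>/(4*(1/2)) - \<rho>^2*\<alpha>^2*e^2/(4*(\<rho>*\<kappa>+7/5*\<kappa>*l1)*l1)
       = K*br - 2*\<mu>"
      unfolding T1 T2 T3 br_def by (simp add: algebra_simps)
    have "K*(br*m) \<ge> K* s^2" using brm K0 by (intro mult_left_mono) auto
    then have "(K*br)*m > (2*\<mu>)*m" using hK by (simp add: mult_ac)
    then have "K*br > 2*\<mu>" using m0 by (simp add: mult_less_cancel_right_pos)
    then show ?thesis using r0 k l eq
      by (intro exI[of _ \<rho>] exI[of _ "1/2"] exI[of _ "7/5"]) (auto simp: add_pos_pos)
  qed
qed

lemma young:
  fixes x y :: "'a::real_inner" assumes k: "k > 0"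
  shows "2*\<bar>inner x y\<bar> \<le> k*(norm x)^2 + (norm y)^2/k"
proof -
  have ea: "(norm (k *\<^sub>R x - y))^2 = k^2*(norm x)^2 - 2*k*inner x y + (norm y)^2"
    unfolding power2_norm_eq_inner by (simp add: inner_diff_left inner_diff_right inner_commute algebra_simps power2_eq_square)
  have eb: "(norm (k *\<^sub>R x + y))^2 = k^2*(norm x)^2 + 2*k*inner x y + (norm y)^2"
    unfolding power2_norm_eq_inner by (simp add: inner_add_left inner_add_right inner_commute algebra_simps power2_eq_square)
  have A: "0 \<le> k^2*(norm x)^2 - 2*k*inner x y + (norm y)^2" using ea by (metis zero_le_power2)
  have B: "0 \<le> k^2*(norm x)^2 + 2*k*inner x y + (norm y)^2" using eb by (metis zero_le_power2)
  have C: "k*(2*\<bar>inner x y\<bar>) \<le> k^2*(norm x)^2 + (norm y)^2"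
  proof (cases "inner x y \<ge> 0")
    case True then show ?thesis using A by (simp add: algebra_simps)
  next
    case False then show ?thesis using B by (simp add: algebra_simps)
  qed
  have "k^2*(norm x)^2 + (norm y)^2 = k*(k*(norm x)^2 + (norm y)^2/k)" using k
    by (simp add: field_simps power2_eq_square)
  then have "k*(2*\<bar>inner x y\<bar>) \<le> k*(k*(norm x)^2 + (norm y)^2/k)" using C by simp
  then show ?thesis using k by (simp add: mult_le_cancel_left_pos)
qed

lemma young_c:
  fixes x y :: "'a::real_inner" assumes k: "k > 0" and c: "c \<ge> 0"
  shows "c*inner x y \<le> c*k/2*(norm x)^2 + c/(2*k)*(norm y)^2"
    and "- (c*inner x y) \<le> c*k/2*(norm x)^2 + c/(2*k)*(norm y)^2"
proof -
  have "c*(2*\<bar>inner x y\<bar>) \<le> c*(k*(norm x)^2 + (norm y)^2/k)"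
    using young[OF k, of x y] c by (rule mult_left_mono)
  moreover have "c*inner x y \<le> c*\<bar>inner x y\<bar>" "-(c*inner x y) \<le> c*\<bar>inner x y\<bar>"
    using mult_left_mono[OF abs_ge_self c, of "inner x y"] mult_left_mono[OF abs_ge_minus_self c, of "inner x y"]
    by auto
  ultimately show "c*inner x y \<le> c*k/2*(norm x)^2 + c/(2*k)*(norm y)^2"
    and "- (c*inner x y) \<le> c*k/2*(norm x)^2 + c/(2*k)*(norm y)^2"
    by (simp_all add: algebra_simps)
qed

lemma young_abs:
  fixes x y :: "'a::real_inner" assumes k: "k > 0"
  shows "z*inner x y \<le> \<bar>z\<bar>*k/2*(norm x)^2 + \<bar>z\<bar>/(2*k)*(norm y)^2"
    and "-(z*inner x y) \<le> \<bar>z\<bar>*k/2*(norm x)^2 + \<bar>z\<bar>/(2*k)*(norm y)^2"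
proof -
  have "\<bar>z\<bar>*(2*\<bar>inner x y\<bar>) \<le> \<bar>z\<bar>*(k*(norm x)^2 + (norm y)^2/k)"
    using young[OF k, of x y] by (rule mult_left_mono) simp
  then have "\<bar>z*inner x y\<bar> \<le> \<bar>z\<bar>*k/2*(norm x)^2 + \<bar>z\<bar>/(2*k)*(norm y)^2"
    by (simp add: abs_mult algebra_simps)
  then show "z*inner x y \<le> \<bar>z\<bar>*k/2*(norm x)^2 + \<bar>z\<bar>/(2*k)*(norm y)^2"
    and "-(z*inner x y) \<le> \<bar>z\<bar>*k/2*(norm x)^2 + \<bar>z\<bar>/(2*k)*(norm y)^2" by linarith+
qed

definition Ldot :: "real \<Rightarrow> real \<Rightarrow> real \<Rightarrow> real \<Rightarrow> real \<Rightarrow> real \<Rightarrow> real \<Rightarrow> 'h::real_inner \<Rightarrow> 'h \<Rightarrow> 'h \<Rightarrow> 'h \<Rightarrow> 'h \<Rightarrow> 'h \<Rightarrow> real" where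
  "Ldot \<alpha> \<gamma> \<kappa> \<eta> \<mu> \<rho> \<epsilon> Pp q V T v th =
     2*\<mu>*(norm V)^2 - 2*\<kappa>*(norm T)^2
     + \<rho>*(-(\<eta>*\<kappa>*inner T V) - \<alpha>*\<eta>*inner th v - \<alpha>*\<eta>^2*(norm V)^2 - \<kappa>*(norm th)^2)
     + \<epsilon>^2*(-((norm q)^2) + 2*\<alpha>*inner v q + (2*\<gamma>+\<mu>)/\<alpha>*inner V Pp - 2*\<mu>/\<alpha>*(norm V)^2
               - 2*\<eta>*inner V T - \<gamma>/\<alpha>*(norm Pp)^2 + \<eta>*inner Pp T)"

definition Edot :: "'h::real_inner \<Rightarrow> 'h \<Rightarrow> 'h \<Rightarrow> 'h \<Rightarrow> real" where
  "Edot Pp q V th = 1/2*((norm Pp)^2 + (norm q)^2 + (norm V)^2 + (norm th)^2)"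

lemma fin_lemma:
  fixes M N D A B C Q P KA KB wP wQ wa wt :: real
  assumes "M \<le> -A - B/2 - C/2" "N \<le> D" "D = -(Q/2) - P/2 + KA + KB" "KA \<le> A/2" "KB \<le> B/2"
    "wP \<le> P" "wQ \<le> Q" "wa \<le> A" "wt \<le> C"
  shows "M + N + (wP + wQ + wa + wt)/2 \<le> 0"
  using assms by argo

lemma main_ineq:
  fixes \<alpha> \<gamma> \<kappa> \<eta> \<mu> l1 :: real
  assumes a: "\<alpha> > 0" and g: "\<gamma> > 0" and k: "\<kappa> > 0" and l: "l1 > 0" and mu: "\<mu> \<ge> 0"
    and hyp: "\<eta>^2 > tfun \<alpha> l1 \<kappa> * \<mu>"
  shows "\<exists>\<rho>>0. \<exists>\<epsilon>0>0. \<forall>\<epsilon>. 0 < \<epsilon> \<and> \<epsilon> < \<epsilon>0 \<longrightarrow> (\<exists>\<omega>>0.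
     \<forall>(Pp::'h::real_inner) q V T v th. l1*(norm v)^2 \<le> (norm V)^2 \<longrightarrow> l1*(norm th)^2 \<le> (norm T)^2 \<longrightarrow>
       Ldot \<alpha> \<gamma> \<kappa> \<eta> \<mu> \<rho> \<epsilon> Pp q V T v th + \<omega> * Edot Pp q V th \<le> 0)"
proof -
  define e where "e = \<bar>\<eta>\<bar>"
  have e2: "e^2 = \<eta>^2" by (simp add: e_def)
  have tpos: "tfun \<alpha> l1 \<kappa> * \<mu> \<ge> 0"
  proof -
    have "tfun \<alpha> l1 \<kappa> \<ge> 0"
    proof (cases "\<kappa> < \<alpha>/l1")
      case True
      have "1 - \<alpha> / (\<kappa> * l1) + \<alpha>\<^sup>2 / (\<kappa>\<^sup>2 * l1\<^sup>2) = (1 - \<alpha> / (\<kappa> * l1))^2 + \<alpha> / (\<kappa> * l1)"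
        using k l by (simp add: field_simps power2_eq_square)
      also have "\<dots> \<ge> 0" using a k l by simp
      finally show ?thesis using True k a unfolding tfun_def by simp
    next
      case False then show ?thesis using k a unfolding tfun_def by simp
    qed
    then show ?thesis using mu by simp
  qed
  have e0: "e > 0" using hyp tpos e_def by (cases "\<eta> = 0") auto
  obtain \<rho> x y where r0: "\<rho> > 0" and x0: "0 < x" and x2: "x < 2" and xy: "x + max y 0 < 2"
      and Y0: "\<rho>*\<kappa> + y*\<kappa>*l1 > 0"
      and cV0: "\<rho>*\<alpha>*e^2 - 2*\<mu> - \<rho>^2*e^2*\<kappa>/(4*x) - \<rho>^2*\<alpha>^2*e^2/(4*(\<rho>*\<kappa>+y*\<kappa>*l1)*l1) > 0"
    using key_rho[OF a k l mu e0] hyp e2 by auto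
  define Y where "Y = \<rho>*\<kappa>+y*\<kappa>*l1"
  define cV where "cV = \<rho>*\<alpha>*e^2 - 2*\<mu> - \<rho>^2*e^2*\<kappa>/(4*x) - \<rho>^2*\<alpha>^2*e^2/(4*Y*l1)"
  define cT where "cT = (2 - x - max y 0)*\<kappa>"
  have cVp: "cV > 0" using cV0 by (simp add: cV_def Y_def)
  have cTp: "cT > 0" unfolding cT_def using xy k by (intro mult_pos_pos) auto
  have Yp: "Y > 0" using Y0 by (simp add: Y_def)
  define C3 where "C3 = (2*\<gamma>+\<mu>)/\<alpha>"
  have C3p: "C3 > 0" using a g mu by (simp add: C3_def)
  define KV where "KV = 2*\<alpha>^2/l1 + C3^2*\<alpha>/(2*\<gamma>) + e"
  define KT where "KT = e + e^2*\<alpha>/\<gamma>"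
  have KVp: "KV > 0" using a g l e0 by (simp add: KV_def add_pos_nonneg)
  have KTp: "KT > 0" using a g e0 by (simp add: KT_def add_pos_nonneg)
  define \<epsilon>0 where "\<epsilon>0 = min 1 (min (cV/(2*KV)) (cT/(2*KT)))"
  have \<epsilon>0p: "\<epsilon>0 > 0" using cVp cTp KVp KTp by (simp add: \<epsilon>0_def)
  show ?thesis
  proof (rule exI[of _ \<rho>], intro conjI r0, rule exI[of _ \<epsilon>0], intro conjI \<epsilon>0p allI impI)
    fix \<epsilon> :: real assume \<epsilon>: "0 < \<epsilon> \<and> \<epsilon> < \<epsilon>0"
    have ee: "\<epsilon>^2 \<le> \<epsilon>0"
    proof -
      have "\<epsilon>^2 \<le> \<epsilon>*1" using \<epsilon> \<epsilon>0_def unfolding power2_eq_square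
        by (intro mult_left_mono) auto
      then show ?thesis using \<epsilon> by simp
    qed
    have eKV: "\<epsilon>^2*KV \<le> cV/2"
    proof -
      have "\<epsilon>^2 \<le> cV/(2*KV)" using ee by (simp add: \<epsilon>0_def)
      then show ?thesis using KVp by (simp add: field_simps)
    qed
    have eKT: "\<epsilon>^2*KT \<le> cT/2"
    proof -
      have "\<epsilon>^2 \<le> cT/(2*KT)" using ee by (simp add: \<epsilon>0_def)
      then show ?thesis using KTp by (simp add: field_simps)
    qed
    define \<omega> where "\<omega> = min (min (\<epsilon>^2) (\<epsilon>^2*\<gamma>/(2*\<alpha>))) (min cV (cT*l1))"
    have \<omega>p: "\<omega> > 0" using \<epsilon> a g cVp cTp l by (simp add: \<omega>_def)
    show "\<exists>\<omega>>0. \<forall>(Pp::'h) q V T v th. l1*(norm v)^2 \<le> (norm V)^2 \<longrightarrow> l1*(norm th)^2 \<le> (norm T)^2 \<longrightarrow>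
       Ldot \<alpha> \<gamma> \<kappa> \<eta> \<mu> \<rho> \<epsilon> Pp q V T v th + \<omega> * Edot Pp q V th \<le> 0"
    proof (rule exI[of _ \<omega>], intro conjI \<omega>p allI impI)
      fix Pp q V T v th :: 'h
      assume Pv: "l1*(norm v)^2 \<le> (norm V)^2" and Pt: "l1*(norm th)^2 \<le> (norm T)^2"
      define a2 where "a2 = (norm V)^2"
      define b2 where "b2 = (norm T)^2"
      define t2 where "t2 = (norm th)^2"
      define v2 where "v2 = (norm v)^2"
      define P2 where "P2 = (norm Pp)^2"
      define Q2 where "Q2 = (norm q)^2"
      have v2a: "v2 \<le> a2/l1" using Pv l by (simp add: a2_def v2_def field_simps)
      have t2b: "l1*t2 \<le> b2" using Pt by (simp add: b2_def t2_def)
      have a20: "a2 \<ge> 0" "b2 \<ge> 0" "t2 \<ge> 0" "v2 \<ge> 0" "P2 \<ge> 0" "Q2 \<ge> 0"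
        by (simp_all add: a2_def b2_def t2_def v2_def P2_def Q2_def)
      define c0 where "c0 = \<rho>*\<alpha>*e^2"
      define c1 where "c1 = \<rho>^2*e^2*\<kappa>/(4*x)"
      define c2 where "c2 = \<rho>^2*\<alpha>^2*e^2/(4*Y*l1)"
      have cVe: "cV = c0 - 2*\<mu> - c1 - c2" by (simp add: cV_def c0_def c1_def c2_def)
      have m1: "-((\<rho>*\<eta>*\<kappa>)*inner V T) \<le> c1*a2 + (x*\<kappa>)*b2"
      proof -
        have kk: "\<rho>*e/(2*x) > 0" using r0 e0 x0 by simp
        have ab: "\<bar>\<rho>*\<eta>*\<kappa>\<bar> = \<rho>*e*\<kappa>" using r0 k by (simp add: e_def abs_mult)
        have q1: "\<bar>\<rho>*\<eta>*\<kappa>\<bar>*(\<rho>*e/(2*x))/2 = c1" unfolding ab c1_def using x0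
          by (simp add: field_simps power2_eq_square)
        have q2: "\<bar>\<rho>*\<eta>*\<kappa>\<bar>/(2*(\<rho>*e/(2*x))) = x*\<kappa>" unfolding ab using x0 r0 e0
          by (simp add: field_simps power2_eq_square)
        show ?thesis using young_abs(2)[OF kk, of "\<rho>*\<eta>*\<kappa>" V T] unfolding q1 q2 a2_def b2_def .
      qed
      have m2: "-((\<rho>*\<alpha>*\<eta>)*inner v th) \<le> c2*a2 + Y*t2"
      proof -
        have kk: "\<rho>*\<alpha>*e/(2*Y) > 0" using r0 e0 Yp a by simp
        have ab: "\<bar>\<rho>*\<alpha>*\<eta>\<bar> = \<rho>*\<alpha>*e" using r0 a by (simp add: e_def abs_mult)
        have q1: "\<bar>\<rho>*\<alpha>*\<eta>\<bar>*(\<rho>*\<alpha>*e/(2*Y))/2 = c2*l1" unfolding ab c2_def using Yp l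
          by (simp add: field_simps power2_eq_square)
        have q2: "\<bar>\<rho>*\<alpha>*\<eta>\<bar>/(2*(\<rho>*\<alpha>*e/(2*Y))) = Y" unfolding ab using Yp r0 e0 a
          by (simp add: field_simps power2_eq_square)
        have "-((\<rho>*\<alpha>*\<eta>)*inner v th) \<le> (c2*l1)* v2 + Y*t2"
          using young_abs(2)[OF kk, of "\<rho>*\<alpha>*\<eta>" v th] unfolding q1 q2 v2_def t2_def .
        moreover have "(c2*l1)* v2 \<le> c2*a2"
        proof -
          have "c2 \<ge> 0" unfolding c2_def using Yp l by simp
          moreover have "l1* v2 \<le> a2" using Pv by (simp add: v2_def a2_def)
          ultimately show ?thesis by (metis mult.assoc mult_left_mono)
        qed
        ultimately show ?thesis by linarith
      qed
      have m3: "(y*\<kappa>*l1)*t2 \<le> (max y 0*\<kappa>)*b2"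
      proof -
        have "y*(\<kappa>*l1*t2) \<le> max y 0*(\<kappa>*l1*t2)"
          by (rule mult_right_mono) (use k l a20 in auto)
        moreover have "max y 0*\<kappa>*(l1*t2) \<le> max y 0*\<kappa>*b2"
          by (rule mult_left_mono[OF t2b]) (use k in auto)
        ultimately show ?thesis by (simp add: mult_ac)
      qed
      have m4: "cT*b2 \<ge> cT/2*b2 + cT*l1/2*t2"
      proof -
        have "cT/2*(l1*t2) \<le> cT/2*b2"
          by (rule mult_left_mono[OF t2b]) (use cTp in auto)
        then show ?thesis by (simp add: mult_ac)
      qed
      have expm: "2*\<mu>*a2 - 2*\<kappa>*b2 + \<rho>*(-(\<eta>*\<kappa>*inner T V) - \<alpha>*\<eta>*inner th v - \<alpha>*\<eta>^2*a2 - \<kappa>*t2)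
          = 2*\<mu>*a2 - 2*\<kappa>*b2 - (\<rho>*\<eta>*\<kappa>)*inner V T - (\<rho>*\<alpha>*\<eta>)*inner v th - c0*a2 - (\<rho>*\<kappa>)*t2"
        by (simp add: c0_def e2 algebra_simps inner_commute)
      have Ye: "Y*t2 - (\<rho>*\<kappa>)*t2 = (y*\<kappa>*l1)*t2" by (simp add: Y_def algebra_simps)
      have cTe: "cT*b2 = 2*\<kappa>*b2 - (x*\<kappa>)*b2 - (max y 0*\<kappa>)*b2" by (simp add: cT_def algebra_simps)
      have cVa: "cV*a2 = c0*a2 - 2*\<mu>*a2 - c1*a2 - c2*a2" by (simp add: cVe algebra_simps)
      have main: "2*\<mu>*a2 - 2*\<kappa>*b2 + \<rho>*(-(\<eta>*\<kappa>*inner T V) - \<alpha>*\<eta>*inner th v - \<alpha>*\<eta>^2*a2 - \<kappa>*t2)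
           \<le> -(cV*a2) - cT/2*b2 - cT*l1/2*t2"
        unfolding expm using m1 m2 m3 m4 Ye cTe cVa by linarith
      have e1: "(2*\<alpha>)*inner v q \<le> (2*\<alpha>^2/l1)*a2 + Q2/2"
      proof -
        have kk: "2*\<alpha> > 0" using a by simp
        have "(2*\<alpha>)*inner v q \<le> (2*\<alpha>^2)* v2 + Q2/2"
          using young_abs(1)[OF kk, of "2*\<alpha>" v q] a
          by (simp add: v2_def Q2_def power2_eq_square)
        moreover have "(2*\<alpha>^2)* v2 \<le> (2*\<alpha>^2/l1)*a2"
        proof -
          have "(2*\<alpha>^2)* v2 \<le> (2*\<alpha>^2)*(a2/l1)" using v2a by (rule mult_left_mono) simp
          then show ?thesis by simp
        qed
        ultimately show ?thesis by linarith
      qed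
      have e2': "C3*inner V Pp \<le> (C3^2*\<alpha>/(2*\<gamma>))*a2 + \<gamma>/(2*\<alpha>)*P2"
      proof -
        have kk: "C3*\<alpha>/\<gamma> > 0" using C3p a g by simp
        have q1: "\<bar>C3\<bar>*(C3*\<alpha>/\<gamma>)/2 = C3^2*\<alpha>/(2*\<gamma>)" using C3p g by (simp add: power2_eq_square)
        have q2: "\<bar>C3\<bar>/(2*(C3*\<alpha>/\<gamma>)) = \<gamma>/(2*\<alpha>)" using C3p a g by simp
        show ?thesis using young_abs(1)[OF kk, of C3 V Pp] unfolding q1 q2 a2_def P2_def .
      qed
      have e3: "-((2*\<eta>)*inner V T) \<le> e*a2 + e*b2"
        using young_abs(2)[of 1 "2*\<eta>" V T] by (simp add: e_def a2_def b2_def abs_mult)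
      have e4: "\<eta>*inner Pp T \<le> \<gamma>/(4*\<alpha>)*P2 + (e^2*\<alpha>/\<gamma>)*b2"
      proof -
        have kk: "\<gamma>/(2*\<alpha>*e) > 0" using g a e0 by simp
        have q1: "\<bar>\<eta>\<bar>*(\<gamma>/(2*\<alpha>*e))/2 = \<gamma>/(4*\<alpha>)" using e0 by (simp add: e_def[symmetric])
        have q2: "\<bar>\<eta>\<bar>/(2*(\<gamma>/(2*\<alpha>*e))) = e^2*\<alpha>/\<gamma>" using e0 g a
          by (simp add: e_def[symmetric] power2_eq_square)
        show ?thesis using young_abs(1)[OF kk, of \<eta> Pp T] unfolding q1 q2 P2_def b2_def .
      qed
      have e5: "2*\<mu>/\<alpha>*a2 \<ge> 0" using mu a a20 by simp
      have KVe: "KV*a2 = (2*\<alpha>^2/l1)*a2 + (C3^2*\<alpha>/(2*\<gamma>))*a2 + e*a2" by (simp add: KV_def algebra_simps)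
      have KTe: "KT*b2 = e*b2 + (e^2*\<alpha>/\<gamma>)*b2" by (simp add: KT_def algebra_simps)
      have Pe: "\<gamma>/\<alpha>*P2 = \<gamma>/(2*\<alpha>)*P2 + \<gamma>/(4*\<alpha>)*P2 + \<gamma>/(4*\<alpha>)*P2" by (simp add: field_simps)
      have ep: "-Q2 + 2*\<alpha>*inner v q + C3*inner V Pp - 2*\<mu>/\<alpha>*a2 - 2*\<eta>*inner V T - \<gamma>/\<alpha>*P2 + \<eta>*inner Pp T
           \<le> -(Q2/2) - \<gamma>/(4*\<alpha>)*P2 + KV*a2 + KT*b2"
        using e1 e2' e3 e4 e5 KVe KTe Pe by (simp add: mult.assoc)
      have epm: "\<epsilon>^2*(-Q2 + 2*\<alpha>*inner v q + C3*inner V Pp - 2*\<mu>/\<alpha>*a2 - 2*\<eta>*inner V T - \<gamma>/\<alpha>*P2 + \<eta>*inner Pp T)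
           \<le> \<epsilon>^2*(-(Q2/2) - \<gamma>/(4*\<alpha>)*P2 + KV*a2 + KT*b2)"
        using ep by (rule mult_left_mono) simp
      have f1: "\<epsilon>^2*(KV*a2) \<le> cV/2*a2" using eKV a20 by (metis mult.assoc mult_right_mono)
      have f2: "\<epsilon>^2*(KT*b2) \<le> cT/2*b2" using eKT a20 by (metis mult.assoc mult_right_mono)
      have w1: "\<omega>*P2 \<le> (\<epsilon>^2*\<gamma>/(2*\<alpha>))*P2" using a20 by (intro mult_right_mono) (auto simp: \<omega>_def)
      have w2: "\<omega>*Q2 \<le> \<epsilon>^2*Q2" using a20 by (intro mult_right_mono) (auto simp: \<omega>_def)
      have w3: "\<omega>*a2 \<le> cV*a2" using a20 by (intro mult_right_mono) (auto simp: \<omega>_def)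
      have w4: "\<omega>*t2 \<le> (cT*l1)*t2" using a20 by (intro mult_right_mono) (auto simp: \<omega>_def)
      have Ld: "Ldot \<alpha> \<gamma> \<kappa> \<eta> \<mu> \<rho> \<epsilon> Pp q V T v th =
          (2*\<mu>*a2 - 2*\<kappa>*b2 + \<rho>*(-(\<eta>*\<kappa>*inner T V) - \<alpha>*\<eta>*inner th v - \<alpha>*\<eta>^2*a2 - \<kappa>*t2))
          + \<epsilon>^2*(-Q2 + 2*\<alpha>*inner v q + C3*inner V Pp - 2*\<mu>/\<alpha>*a2 - 2*\<eta>*inner V T - \<gamma>/\<alpha>*P2 + \<eta>*inner Pp T)"
        by (simp add: Ldot_def a2_def b2_def t2_def P2_def Q2_def C3_def)
      have Ed: "\<omega> * Edot Pp q V th = (\<omega>*P2 + \<omega>*Q2 + \<omega>*a2 + \<omega>*t2)/2"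
        by (simp add: Edot_def a2_def t2_def P2_def Q2_def algebra_simps)
      have dist: "\<epsilon>^2*(-(Q2/2) - \<gamma>/(4*\<alpha>)*P2 + KV*a2 + KT*b2) = -(\<epsilon>^2*Q2/2) - (\<epsilon>^2*\<gamma>/(2*\<alpha>))*P2/2 + \<epsilon>^2*(KV*a2) + \<epsilon>^2*(KT*b2)"
        by (simp add: algebra_simps)
      show fin: "Ldot \<alpha> \<gamma> \<kappa> \<eta> \<mu> \<rho> \<epsilon> Pp q V T v th + \<omega> * Edot Pp q V th \<le> 0"
        unfolding Ld Ed
      proof (rule fin_lemma[OF _ epm _ _ _ w1 w2 w3 w4])
        show "2*\<mu>*a2 - 2*\<kappa>*b2 + \<rho>*(-(\<eta>*\<kappa>*inner T V) - \<alpha>*\<eta>*inner th v - \<alpha>*\<eta>^2*a2 - \<kappa>*t2)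
          \<le> -(cV*a2) - (cT*b2)/2 - (cT*l1*t2)/2" using main by argo
        show "\<epsilon>^2*(-(Q2/2) - \<gamma>/(4*\<alpha>)*P2 + KV*a2 + KT*b2) = -((\<epsilon>^2*Q2)/2) - (\<epsilon>^2*\<gamma>/(2*\<alpha>)*P2)/2 + \<epsilon>^2*(KV*a2) + \<epsilon>^2*(KT*b2)"
          using dist by argo
        show "\<epsilon>^2*(KV*a2) \<le> (cV*a2)/2" using f1 by argo
        show "\<epsilon>^2*(KT*b2) \<le> (cT*b2)/2" using f2 by argo
      qed
    qed
  qed
qed

lemma gen_cs:
  fixes a b c :: real
  assumes h: "\<And>t. 0 \<le> a + 2*t*b + t^2*c" and c: "c \<ge> 0"
  shows "b^2 \<le> a*c"
proof (cases "c > 0")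
  case True
  have "0 \<le> a + 2*(-b/c)*b + (-b/c)^2*c" by (rule h)
  also have "\<dots> = a - b^2/c" using True by (simp add: field_simps power2_eq_square)
  finally show ?thesis using True by (simp add: field_simps)
next
  case False
  then have c0: "c = 0" using c by simp
  show ?thesis
  proof (cases "b = 0")
    case True then show ?thesis using c0 by simp
  next
    case False
    have "0 \<le> a + 2*(-(a+1)/(2*b))*b + (-(a+1)/(2*b))^2*c" by (rule h)
    also have "\<dots> = -1" using False c0 by (simp add: field_simps)
    finally show ?thesis by simp
  qed
qed

lemma linop_facts:
  assumes "linear_op D T"
  shows "subspace D" "\<And>x y. x \<in> D \<Longrightarrow> y \<in> D \<Longrightarrow> T (x + y) = T x + T y"
    "\<And>c x. x \<in> D \<Longrightarrow> T (c *\<^sub>R x) = c *\<^sub>R T x"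
    "\<And>x y. x \<in> D \<Longrightarrow> y \<in> D \<Longrightarrow> T (x - y) = T x - T y"
    "T 0 = 0" "0 \<in> D"
proof -
  show sD: "subspace D" using assms by (simp add: linear_op_def)
  show ad: "\<And>x y. x \<in> D \<Longrightarrow> y \<in> D \<Longrightarrow> T (x + y) = T x + T y" using assms by (simp add: linear_op_def)
  show sc: "\<And>c x. x \<in> D \<Longrightarrow> T (c *\<^sub>R x) = c *\<^sub>R T x" using assms by (simp add: linear_op_def)
  show z: "0 \<in> D" using sD by (simp add: subspace_0)
  show "T 0 = 0" using sc[OF z, of 0] by simp
  show "\<And>x y. x \<in> D \<Longrightarrow> y \<in> D \<Longrightarrow> T (x - y) = T x - T y"
  proof -
    fix x y assume x: "x \<in> D" and y: "y \<in> D"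
    have "(-1) *\<^sub>R y \<in> D" using sD y by (simp add: subspace_neg)
    then have "T (x + (-1) *\<^sub>R y) = T x + T ((-1) *\<^sub>R y)" using ad x by blast
    then show "T (x - y) = T x - T y" using sc[OF y, of "-1"] by simp
  qed
qed

lemma A_lower:
  fixes DA :: "'h::{real_inner,complete_space} set" and A :: "'h \<Rightarrow> 'h"
  assumes sa: "selfadjoint_op DA A" and pos: "strictly_positive_op DA A"
    and l1_min: "\<forall>l\<in>op_spectrum DA A. l1 \<le> l"
  shows "\<forall>x\<in>DA. l1*(norm x)^2 \<le> inner (A x) x"
proof (rule ccontr)
  assume "\<not> ?thesis"
  then obtain x0 where x0D: "x0 \<in> DA" and x0l: "inner (A x0) x0 < l1*(norm x0)^2" by auto
  have lin: "linear_op DA A" using sa by (simp add: selfadjoint_op_def)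
  note L = linop_facts[OF lin]
  have sym: "\<And>x y. x \<in> DA \<Longrightarrow> y \<in> DA \<Longrightarrow> inner (A x) y = inner x (A y)"
    using sa by (simp add: selfadjoint_op_def)
  have posx: "\<And>x. x \<in> DA \<Longrightarrow> inner (A x) x \<ge> 0"
  proof -
    fix x assume x: "x \<in> DA"
    show "inner (A x) x \<ge> 0"
    proof (cases "x = 0")
      case True then show ?thesis using L(5) by simp
    next
      case False then show ?thesis using pos x unfolding strictly_positive_op_def by (simp add: less_imp_le)
    qed
  qed
  have x00: "x0 \<noteq> 0" using x0l L(5) by auto
  have quad_scale: "\<And>x c. x \<in> DA \<Longrightarrow> inner (A (c *\<^sub>R x)) (c *\<^sub>R x) = c^2 * inner (A x) x"
    using L(3) by (simp add: power2_eq_square)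
  define n where "n = (\<lambda>x::'h. (1/norm x) *\<^sub>R x)"
  have n1: "\<And>x. x \<noteq> 0 \<Longrightarrow> norm (n x) = 1" by (simp add: n_def)
  have nD: "\<And>x. x \<in> DA \<Longrightarrow> n x \<in> DA" using L(1) by (simp add: n_def subspace_scale)
  have nq: "\<And>x. x \<in> DA \<Longrightarrow> x \<noteq> 0 \<Longrightarrow> inner (A (n x)) (n x) * (norm x)^2 = inner (A x) x"
  proof -
    fix x assume x: "x \<in> DA" and x0: "x \<noteq> 0"
    have "inner (A (n x)) (n x) = (1/norm x)^2 * inner (A x) x" unfolding n_def by (rule quad_scale[OF x])
    then show "inner (A (n x)) (n x) * (norm x)^2 = inner (A x) x" using x0 by (simp add: power2_eq_square)
  qed
  define R where "R = {inner (A x) x | x. x \<in> DA \<and> norm x = 1}"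
  have x1R: "inner (A (n x0)) (n x0) \<in> R" using n1[OF x00] nD[OF x0D] by (auto simp: R_def)
  have x1l: "inner (A (n x0)) (n x0) < l1"
  proof -
    have "inner (A (n x0)) (n x0) * (norm x0)^2 < l1*(norm x0)^2" using nq[OF x0D x00] x0l by simp
    then show ?thesis using x00 by simp
  qed
  have bdd: "bdd_below R" unfolding R_def bdd_below_def using posx by blast
  have Rne: "R \<noteq> {}" using x1R by auto
  define m where "m = Inf R"
  have ml: "m < l1" using cInf_lower[OF x1R bdd] x1l by (simp add: m_def)
  have hm: "\<And>x. x \<in> DA \<Longrightarrow> m*(norm x)^2 \<le> inner (A x) x"
  proof -
    fix x assume x: "x \<in> DA"
    show "m*(norm x)^2 \<le> inner (A x) x"
    proof (cases "x = 0")
      case True then show ?thesis using L(5) by simp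
    next
      case False
      have "inner (A (n x)) (n x) \<in> R" using n1[OF False] nD[OF x] by (auto simp: R_def)
      then have "m \<le> inner (A (n x)) (n x)" unfolding m_def using bdd by (rule cInf_lower)
      then have "m*(norm x)^2 \<le> inner (A (n x)) (n x) * (norm x)^2" by (simp add: mult_right_mono)
      then show ?thesis using nq[OF x False] by simp
    qed
  qed
  have "m \<notin> op_spectrum DA A"
  proof
    assume "m \<in> op_spectrum DA A"
    then have "l1 \<le> m" using l1_min by blast
    then show False using ml by simp
  qed
  then have P: "bij_betw (\<lambda>x. A x - m *\<^sub>R x) DA UNIV \<and> (\<exists>C. \<forall>x\<in>DA. norm x \<le> C * norm (A x - m *\<^sub>R x))"
    unfolding op_spectrum_def by (simp only: mem_Collect_eq not_not)
  then have bij: "bij_betw (\<lambda>x. A x - m *\<^sub>R x) DA UNIV" by (rule conjunct1)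
  obtain C where C: "\<forall>x\<in>DA. norm x \<le> C * norm (A x - m *\<^sub>R x)" using P by blast
  define B where "B = (\<lambda>x. A x - m *\<^sub>R x)"
  have Bpos: "\<And>x. x \<in> DA \<Longrightarrow> inner (B x) x \<ge> 0"
    using hm by (simp add: B_def inner_diff_left power2_norm_eq_inner)
  have Bsym: "\<And>x y. x \<in> DA \<Longrightarrow> y \<in> DA \<Longrightarrow> inner (B x) y = inner x (B y)"
    using sym by (simp add: B_def inner_diff_left inner_diff_right inner_commute)
  have Bquad: "\<And>x y t. x \<in> DA \<Longrightarrow> y \<in> DA \<Longrightarrow>
      inner (B (x + t *\<^sub>R y)) (x + t *\<^sub>R y) = inner (B x) x + 2*t*inner (B x) y + t^2*inner (B y) y"
  proof -
    fix x y t assume x: "x \<in> DA" and y: "y \<in> DA"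
    have ty: "t *\<^sub>R y \<in> DA" using L(1) y by (simp add: subspace_scale)
    have "B (x + t *\<^sub>R y) = B x + t *\<^sub>R B y"
      using L(2)[OF x ty] L(3)[OF y] by (simp add: B_def algebra_simps)
    moreover have "inner (B y) x = inner (B x) y" using Bsym[OF y x] by (simp add: inner_commute)
    ultimately show "inner (B (x + t *\<^sub>R y)) (x + t *\<^sub>R y) = inner (B x) x + 2*t*inner (B x) y + t^2*inner (B y) y"
      by (simp add: inner_add_left inner_add_right power2_eq_square algebra_simps)
  qed
  have BCS: "\<And>x y. x \<in> DA \<Longrightarrow> y \<in> DA \<Longrightarrow> (inner (B x) y)^2 \<le> inner (B x) x * inner (B y) y"
  proof -
    fix x y assume x: "x \<in> DA" and y: "y \<in> DA"
    show "(inner (B x) y)^2 \<le> inner (B x) x * inner (B y) y"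
    proof (rule gen_cs)
      fix t :: real
      have "x + t *\<^sub>R y \<in> DA" using L(1) x y by (simp add: subspace_add subspace_scale)
      then have "0 \<le> inner (B (x + t *\<^sub>R y)) (x + t *\<^sub>R y)" by (rule Bpos)
      then show "0 \<le> inner (B x) x + 2*t*inner (B x) y + t^2*inner (B y) y"
        unfolding Bquad[OF x y] .
    next
      show "inner (B y) y \<ge> 0" using Bpos[OF y] .
    qed
  qed
  have key: "\<And>x. x \<in> DA \<Longrightarrow> norm x = 1 \<Longrightarrow> 1 \<le> C * inner (B x) x"
  proof -
    fix x assume x: "x \<in> DA" and nx: "norm x = 1"
    have "x \<in> B ` DA" using bij unfolding B_def bij_betw_def by simp
    then obtain y where y: "y \<in> DA" and By: "B y = x" by blast
    have "norm y \<le> C * norm (A y - m *\<^sub>R y)" using C y by blast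
    then have ny: "norm y \<le> C" using By nx unfolding B_def by simp
    have "1 = inner x x" using nx by (simp add: power2_norm_eq_inner[symmetric])
    also have "\<dots> = inner (B y) x" using By by simp
    finally have one: "1 = inner (B y) x" .
    have "1 \<le> inner (B y) y * inner (B x) x" using BCS[OF y x] one by (simp add: mult.commute)
    moreover have "inner (B y) y \<le> C"
    proof -
      have "inner (B y) y = inner x y" using By by simp
      also have "\<dots> \<le> norm x * norm y" by (rule norm_cauchy_schwarz)
      also have "\<dots> \<le> C" using nx ny by simp
      finally show ?thesis .
    qed
    moreover have "inner (B y) y * inner (B x) x \<le> C * inner (B x) x"
      using calculation(2) Bpos[OF x] by (rule mult_right_mono)
    ultimately show "1 \<le> C * inner (B x) x" by linarith
  qed
  have Cpos: "C > 0"
  proof -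
    have "1 \<le> C * inner (B (n x0)) (n x0)" using key[OF nD[OF x0D] n1[OF x00]] .
    moreover have "C \<le> 0 \<Longrightarrow> C * inner (B (n x0)) (n x0) \<le> 0"
      using Bpos[OF nD[OF x0D]] by (simp add: mult_nonpos_nonneg)
    ultimately show ?thesis by force
  qed
  have "m + 1/C \<le> m"
    unfolding m_def
  proof (rule cInf_greatest[OF Rne])
    fix r assume "r \<in> R"
    then obtain x where x: "x \<in> DA" "norm x = 1" and r: "r = inner (A x) x" by (auto simp: R_def)
    have "1 \<le> C * inner (B x) x" using key[OF x] .
    then have "1/C \<le> inner (B x) x" using Cpos by (simp add: field_simps)
    moreover have "inner (B x) x = r - Inf R" using x r by (simp add: B_def m_def inner_diff_left power2_norm_eq_inner[symmetric])
    ultimately show "Inf R + 1/C \<le> r" by simp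
  qed
  then show False using Cpos by simp
qed


lemma poinc_real:
  fixes X Y P Q l :: real
  assumes "X \<ge> 0" "Y \<ge> 0" "P \<ge> 0" "Q \<ge> 0" "l > 0"
    and h1: "X^2 \<le> P*Q" and h2: "P^2 \<le> Y*X" and h3: "l*Y^2 \<le> X*Y"
  shows "l*X^2 \<le> Q^2" and "l*P^2 \<le> X^2"
proof -
  have lY: "l*Y \<le> X \<or> Y = 0"
  proof (cases "Y = 0")
    case False
    then have "Y > 0" using assms by simp
    then have "(l*Y)*Y \<le> X*Y" using h3 by (simp add: power2_eq_square mult_ac)
    then show ?thesis using \<open>Y > 0\<close> by simp
  qed simp
  show lP: "l*P^2 \<le> X^2"
  proof (cases "Y = 0")
    case True then have "P^2 \<le> 0" using h2 by simp
    then show ?thesis using assms by (simp add: mult_nonneg_nonneg)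
  next
    case False
    then have "l*Y \<le> X" using lY by simp
    have "l*P^2 \<le> l*(Y*X)" using h2 assms by simp
    also have "\<dots> = (l*Y)*X" by simp
    also have "\<dots> \<le> X*X" using \<open>l*Y \<le> X\<close> assms by (intro mult_right_mono) auto
    finally show ?thesis by (simp add: power2_eq_square)
  qed
  show "l*X^2 \<le> Q^2"
  proof (cases "X = 0")
    case True then show ?thesis by simp
  next
    case False
    then have X0: "X > 0" using assms by simp
    have "(X^2)^2 \<le> (P*Q)^2" by (rule power_mono[OF h1]) simp
    then have "X^2*X^2 \<le> (P*Q)^2" by (simp add: power2_eq_square[of "X^2"])
    then have "l*(X^2*X^2) \<le> l*(P^2*Q^2)" using assms by (simp add: power_mult_distrib)
    also have "\<dots> = (l*P^2)*Q^2" by simp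
    also have "\<dots> \<le> X^2*Q^2" using lP by (intro mult_right_mono) auto
    finally have "(l*X^2)*X^2 \<le> Q^2*X^2" by (simp add: mult_ac)
    then show ?thesis using X0 by simp
  qed
qed

lemma S_facts:
  fixes DA DS :: "'h::{real_inner,complete_space} set" and A S :: "'h \<Rightarrow> 'h"
  assumes A_sa: "selfadjoint_op DA A" and A_pos: "strictly_positive_op DA A"
    and l1_min: "\<forall>l\<in>op_spectrum DA A. l1 \<le> l" and l1_pos: "l1 > 0"
    and S_sa: "selfadjoint_op DS S"
    and S_dom: "DA = {x \<in> DS. S x \<in> DS}"
    and S_sq: "\<forall>x\<in>DA. A x = S (S x)"
  shows "\<forall>x\<in>DS. l1*(norm x)^2 \<le> (norm (S x))^2"
    and "\<forall>y. op_inv DS S y \<in> DS \<and> S (op_inv DS S y) = y"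
    and "\<forall>x\<in>DS. op_inv DS S (S x) = x"
    and "bounded_linear (op_inv DS S)"
    and "\<forall>y. l1*(norm (op_inv DS S y))^2 \<le> (norm y)^2"
proof -
  have Al: "\<forall>x\<in>DA. l1*(norm x)^2 \<le> inner (A x) x" by (rule A_lower[OF A_sa A_pos l1_min])
  have "0 \<notin> op_spectrum DA A"
  proof
    assume "0 \<in> op_spectrum DA A"
    then have "l1 \<le> 0" using l1_min by blast
    then show False using l1_pos by simp
  qed
  then have "bij_betw (\<lambda>x. A x - 0 *\<^sub>R x) DA UNIV"
    unfolding op_spectrum_def by (simp only: mem_Collect_eq not_not)
  then have bijA: "bij_betw A DA UNIV" by simp
  have surjA: "\<And>y. \<exists>z\<in>DA. A z = y"
  proof -
    fix y :: 'h
    have "y \<in> A ` DA" using bijA unfolding bij_betw_def by simp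
    then show "\<exists>z\<in>DA. A z = y" by blast
  qed
  have Slin: "linear_op DS S" using S_sa by (simp add: selfadjoint_op_def)
  note L = linop_facts[OF Slin]
  have Ssym: "\<And>x y. x \<in> DS \<Longrightarrow> y \<in> DS \<Longrightarrow> inner (S x) y = inner x (S y)"
    using S_sa by (simp add: selfadjoint_op_def)
  show P1: "\<forall>x\<in>DS. l1*(norm x)^2 \<le> (norm (S x))^2"
  proof
    fix x assume x: "x \<in> DS"
    obtain y where y: "y \<in> DA" and Ay: "A y = x" using surjA by blast
    have yS: "y \<in> DS" and SyS: "S y \<in> DS" using y S_dom by auto
    have SSy: "S (S y) = x" using S_sq y Ay by simp
    have h1: "(norm x)^2 \<le> norm (S y) * norm (S x)"
    proof -
      have "(norm x)^2 = inner x x" by (simp add: power2_norm_eq_inner)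
      also have "\<dots> = inner (S (S y)) x" using SSy by simp
      also have "\<dots> = inner (S y) (S x)" using Ssym[OF SyS x] .
      also have "\<dots> \<le> norm (S y) * norm (S x)" by (rule norm_cauchy_schwarz)
      finally show ?thesis .
    qed
    have h2: "(norm (S y))^2 \<le> norm y * norm x"
    proof -
      have "(norm (S y))^2 = inner (S y) (S y)" by (simp add: power2_norm_eq_inner)
      also have "\<dots> = inner y (S (S y))" using Ssym[OF yS SyS] .
      also have "\<dots> = inner y x" using SSy by simp
      also have "\<dots> \<le> norm y * norm x" by (rule norm_cauchy_schwarz)
      finally show ?thesis .
    qed
    have h3: "l1*(norm y)^2 \<le> norm x * norm y"
    proof -
      have "l1*(norm y)^2 \<le> inner (A y) y" using Al y by blast
      also have "\<dots> = inner x y" using Ay by simp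
      also have "\<dots> \<le> norm x * norm y" by (rule norm_cauchy_schwarz)
      finally show ?thesis .
    qed
    show "l1*(norm x)^2 \<le> (norm (S x))^2"
      by (rule poinc_real(1)[OF _ _ _ _ l1_pos h1 h2 h3]) auto
  qed
  have inj: "\<And>a b. a \<in> DS \<Longrightarrow> b \<in> DS \<Longrightarrow> S a = S b \<Longrightarrow> a = b"
  proof -
    fix a b assume a: "a \<in> DS" and b: "b \<in> DS" and e: "S a = S b"
    have ab: "a - b \<in> DS" using L(1) a b by (simp add: subspace_diff)
    have "S (a - b) = 0" using L(4)[OF a b] e by simp
    then have "l1*(norm (a-b))^2 \<le> 0" using P1 ab by fastforce
    then have "norm (a - b) = 0" using l1_pos by (simp add: mult_le_0_iff)
    then show "a = b" by simp
  qed
  have oi: "\<And>x y. x \<in> DS \<Longrightarrow> S x = y \<Longrightarrow> op_inv DS S y = x"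
    unfolding op_inv_def using inj by (intro the_equality) auto
  show P2: "\<forall>y. op_inv DS S y \<in> DS \<and> S (op_inv DS S y) = y"
  proof
    fix y :: 'h
    obtain z where z: "z \<in> DA" and Az: "A z = y" using surjA by blast
    have SzS: "S z \<in> DS" using z S_dom by auto
    have "S (S z) = y" using S_sq z Az by simp
    then have "op_inv DS S y = S z" using oi SzS by blast
    then show "op_inv DS S y \<in> DS \<and> S (op_inv DS S y) = y" using SzS \<open>S (S z) = y\<close> by simp
  qed
  show "\<forall>x\<in>DS. op_inv DS S (S x) = x" using oi by blast
  show P5: "\<forall>y. l1*(norm (op_inv DS S y))^2 \<le> (norm y)^2" using P1 P2 by metis
  show "bounded_linear (op_inv DS S)"
  proof (rule bounded_linear_intro[where K="1/sqrt l1"])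
    fix a b :: 'h
    have "op_inv DS S a + op_inv DS S b \<in> DS" using P2 L(1) by (simp add: subspace_add)
    moreover have "S (op_inv DS S a + op_inv DS S b) = a + b" using P2 L(2) by simp
    ultimately show "op_inv DS S (a + b) = op_inv DS S a + op_inv DS S b" using oi by blast
  next
    fix r and a :: 'h
    have "r *\<^sub>R op_inv DS S a \<in> DS" using P2 L(1) by (simp add: subspace_scale)
    moreover have "S (r *\<^sub>R op_inv DS S a) = r *\<^sub>R a" using P2 L(3) by simp
    ultimately show "op_inv DS S (r *\<^sub>R a) = r *\<^sub>R op_inv DS S a" using oi by blast
  next
    fix a :: 'h
    have "(norm (op_inv DS S a))^2 \<le> (norm a)^2/l1" using P5 l1_pos by (simp add: field_simps mult.commute)
    also have "\<dots> = (norm a * (1/sqrt l1))^2" using l1_pos by (simp add: power_mult_distrib power_divide)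
    finally show "norm (op_inv DS S a) \<le> norm a * (1/sqrt l1)"
      by (rule power2_le_imp_le) (use l1_pos in simp)
  qed
qed

lemma deriv_identity:
  fixes a b c d h v w :: "'h::real_inner" and \<alpha> \<beta> \<gamma> \<kappa> \<eta> \<rho> \<epsilon> :: real
  assumes a0: "\<alpha> \<noteq> 0"
  shows "\<gamma>/\<alpha>*(2*inner (b + \<alpha> *\<^sub>R a) (c + \<alpha> *\<^sub>R b))
     + 2*(-inner (c + \<alpha> *\<^sub>R b) (\<beta> *\<^sub>R b + \<gamma> *\<^sub>R a - \<eta> *\<^sub>R d))
     - (\<gamma> - \<alpha>*\<beta>)/\<alpha>*(2*inner b c)
     + 2*(-inner d (\<kappa> *\<^sub>R d + \<eta> *\<^sub>R c + (\<alpha>*\<eta>) *\<^sub>R b))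
     + \<rho>*(\<eta>*(-inner (\<kappa> *\<^sub>R d + \<eta> *\<^sub>R c + (\<alpha>*\<eta>) *\<^sub>R b) b + inner h w) + \<eta>^2/2*(2*inner b c)
            + 1/2*(2*(-inner h (\<kappa> *\<^sub>R h + \<eta> *\<^sub>R w + (\<alpha>*\<eta>) *\<^sub>R v))))
     + \<epsilon>^2*(-(inner (w - \<alpha> *\<^sub>R v) (w + \<alpha> *\<^sub>R v) + -inner (b - \<alpha> *\<^sub>R a) (\<beta> *\<^sub>R b + \<gamma> *\<^sub>R a - \<eta> *\<^sub>R d)))
   = Ldot \<alpha> \<gamma> \<kappa> \<eta> (\<gamma> - \<alpha>*\<beta>) \<rho> \<epsilon> (b + \<alpha> *\<^sub>R a) (w + \<alpha> *\<^sub>R v) b d v h"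
  unfolding Ldot_def power2_norm_eq_inner
  using a0
  by (simp add: inner_add_left inner_add_right inner_diff_left inner_diff_right inner_commute[of b a] inner_commute[of c a]
       inner_commute[of c b] inner_commute[of d a] inner_commute[of d b] inner_commute[of d c] inner_commute[of v h] inner_commute[of w h] inner_commute[of w v]
       field_simps power2_eq_square)

lemma inner_vd:
  assumes f: "(f has_vector_derivative f') (at x within X)" and g: "(g has_vector_derivative g') (at x within X)"
  shows "((\<lambda>s. inner (f s) (g s)) has_real_derivative (inner f' (g x) + inner (f x) g')) (at x within X)"
proof -
  have "((\<lambda>s. inner (f s) (g s)) has_derivative (\<lambda>h. inner (f x) (h *\<^sub>R g') + inner (h *\<^sub>R f') (g x))) (at x within X)"
    using has_derivative_inner[OF f[unfolded has_vector_derivative_def] g[unfolded has_vector_derivative_def]] .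
  moreover have "(\<lambda>h. inner (f x) (h *\<^sub>R g') + inner (h *\<^sub>R f') (g x)) = (\<lambda>h. (inner f' (g x) + inner (f x) g') * h)"
    by (auto simp: algebra_simps)
  ultimately show ?thesis unfolding has_field_derivative_def by simp
qed

lemma norm2_vd:
  assumes f: "(f has_vector_derivative f') (at x within X)"
  shows "((\<lambda>s. (norm (f s))^2) has_real_derivative (2*inner (f x) f')) (at x within X)"
proof -
  have "((\<lambda>s. inner (f s) (f s)) has_real_derivative (inner f' (f x) + inner (f x) f')) (at x within X)"
    by (rule inner_vd[OF f f])
  then show ?thesis by (simp add: power2_norm_eq_inner inner_commute)
qed

lemma tfun_nonneg:
  assumes a: "\<alpha> > 0" and k: "\<kappa> > 0" and l: "l1 > 0"
  shows "tfun \<alpha> l1 \<kappa> \<ge> 0"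
proof (cases "\<kappa> < \<alpha>/l1")
  case True
  have "1 - \<alpha> / (\<kappa> * l1) + \<alpha>\<^sup>2 / (\<kappa>\<^sup>2 * l1\<^sup>2) = (1 - \<alpha> / (\<kappa> * l1))^2 + \<alpha> / (\<kappa> * l1)"
    using k l by (simp add: field_simps power2_eq_square)
  also have "\<dots> \<ge> 0" using a k l by simp
  finally show ?thesis using True k a unfolding tfun_def by simp
next
  case False then show ?thesis using k a unfolding tfun_def by simp
qed

lemma reg_solD:
  assumes "regular_solution DA A DS S \<alpha> \<beta> \<gamma> \<kappa> \<eta> u v w th" and "t \<ge> 0"
  shows "u t \<in> DS" "v t \<in> DS" "w t \<in> DS"
    "\<beta> *\<^sub>R v t + \<gamma> *\<^sub>R u t - \<eta> *\<^sub>R th t \<in> DA"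
    "\<kappa> *\<^sub>R th t + \<eta> *\<^sub>R w t + (\<alpha> * \<eta>) *\<^sub>R v t \<in> DA"
    "(u has_vector_derivative v t) (at t within {0..})"
    "((\<lambda>s. S (u s)) has_vector_derivative S (v t)) (at t within {0..})"
    "(v has_vector_derivative w t) (at t within {0..})"
    "((\<lambda>s. S (v s)) has_vector_derivative S (w t)) (at t within {0..})"
    "(w has_vector_derivative
        (- (\<alpha> *\<^sub>R w t) - A (\<beta> *\<^sub>R v t + \<gamma> *\<^sub>R u t - \<eta> *\<^sub>R th t))) (at t within {0..})"
    "(th has_vector_derivative
        (- A (\<kappa> *\<^sub>R th t + \<eta> *\<^sub>R w t + (\<alpha> * \<eta>) *\<^sub>R v t))) (at t within {0..})"
proof -
  note X = assms(1)[unfolded regular_solution_def, rule_format, OF assms(2)]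
  show "u t \<in> DS" using X by (rule conjunct1)
  show "v t \<in> DS" using X[THEN conjunct2] by (rule conjunct1)
  show "w t \<in> DS" using X[THEN conjunct2, THEN conjunct2] by (rule conjunct1)
  show "\<beta> *\<^sub>R v t + \<gamma> *\<^sub>R u t - \<eta> *\<^sub>R th t \<in> DA" using X[THEN conjunct2, THEN conjunct2, THEN conjunct2] by (rule conjunct1)
  note Y = X[THEN conjunct2, THEN conjunct2, THEN conjunct2, THEN conjunct2]
  show "\<kappa> *\<^sub>R th t + \<eta> *\<^sub>R w t + (\<alpha> * \<eta>) *\<^sub>R v t \<in> DA" using Y by (rule conjunct1)
  show "(u has_vector_derivative v t) (at t within {0..})" using Y[THEN conjunct2] by (rule conjunct1)
  show "((\<lambda>s. S (u s)) has_vector_derivative S (v t)) (at t within {0..})" using Y[THEN conjunct2, THEN conjunct2] by (rule conjunct1)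
  note Z = Y[THEN conjunct2, THEN conjunct2, THEN conjunct2]
  show "(v has_vector_derivative w t) (at t within {0..})" using Z by (rule conjunct1)
  show "((\<lambda>s. S (v s)) has_vector_derivative S (w t)) (at t within {0..})" using Z[THEN conjunct2] by (rule conjunct1)
  show "(w has_vector_derivative
        (- (\<alpha> *\<^sub>R w t) - A (\<beta> *\<^sub>R v t + \<gamma> *\<^sub>R u t - \<eta> *\<^sub>R th t))) (at t within {0..})"
    using Z[THEN conjunct2, THEN conjunct2] by (rule conjunct1)
  show "(th has_vector_derivative
        (- A (\<kappa> *\<^sub>R th t + \<eta> *\<^sub>R w t + (\<alpha> * \<eta>) *\<^sub>R v t))) (at t within {0..})"
    using Z[THEN conjunct2, THEN conjunct2] by (rule conjunct2)
qed

lemma vd_cscale: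
  assumes "(f has_vector_derivative f') F"
  shows "((\<lambda>x. c *\<^sub>R f x) has_vector_derivative c *\<^sub>R f') F"
  by (rule bounded_linear.has_vector_derivative[OF bounded_linear_scaleR_right assms])

theorem lemma7p4:
  fixes DA DS :: "'h::{real_inner,complete_space} set"
    and A S :: "'h \<Rightarrow> 'h"
    and \<alpha> \<beta> \<gamma> \<kappa> \<eta> l1 :: real
  assumes A_sa: "selfadjoint_op DA A"
    and A_pos: "strictly_positive_op DA A"
    and l1_spec: "l1 \<in> op_spectrum DA A"
    and l1_min: "\<forall>l\<in>op_spectrum DA A. l1 \<le> l"
    and l1_pos: "l1 > 0"
    and S_sa: "selfadjoint_op DS S"
    and S_pos: "positive_op DS S"
    and S_dom: "DA = {x \<in> DS. S x \<in> DS}"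
    and S_sq: "\<forall>x\<in>DA. A x = S (S x)"
    and \<alpha>_pos: "\<alpha> > 0" and \<beta>_pos: "\<beta> > 0" and \<gamma>_pos: "\<gamma> > 0" and \<kappa>_pos: "\<kappa> > 0"
    and \<mu>_nonneg: "\<gamma> - \<alpha> * \<beta> \<ge> 0"
    and \<eta>_big: "\<eta>\<^sup>2 > tfun \<alpha> l1 \<kappa> * (\<gamma> - \<alpha> * \<beta>)"
  shows "\<exists>\<rho>>0. \<exists>\<epsilon>0>0. \<forall>\<epsilon>. 0 < \<epsilon> \<and> \<epsilon> < \<epsilon>0 \<longrightarrow>
     (\<exists>\<omega>>0. \<forall>u v w th. regular_solution DA A DS S \<alpha> \<beta> \<gamma> \<kappa> \<eta> u v w th \<longrightarrow>
        (\<forall>t\<ge>0. \<exists>L'.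
           ((\<lambda>s. Lfun DS S \<alpha> \<beta> \<gamma> \<eta> \<rho> \<epsilon> (u s) (v s) (w s) (th s)) has_real_derivative L')
              (at t within {0..}) \<and>
           L' + \<omega> * Efun S \<alpha> (u t) (v t) (w t) (th t) \<le> 0))"
proof -
  note SF = S_facts[OF A_sa A_pos l1_min l1_pos S_sa S_dom S_sq]
  have Slin: "linear_op DS S" using S_sa by (simp add: selfadjoint_op_def)
  note L = linop_facts[OF Slin]
  have Ssym: "\<And>x y. x \<in> DS \<Longrightarrow> y \<in> DS \<Longrightarrow> inner (S x) y = inner x (S y)"
    using S_sa by (simp add: selfadjoint_op_def)
  have DAS: "\<And>x. x \<in> DA \<Longrightarrow> x \<in> DS" "\<And>x. x \<in> DA \<Longrightarrow> S x \<in> DS" using S_dom by auto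
  have sub: "subspace DS" by (rule L(1))
  have \<eta>0: "\<eta> \<noteq> 0"
  proof
    assume "\<eta> = 0"
    then have "tfun \<alpha> l1 \<kappa> * (\<gamma> - \<alpha> * \<beta>) < 0" using \<eta>_big by simp
    moreover have "tfun \<alpha> l1 \<kappa> * (\<gamma> - \<alpha> * \<beta>) \<ge> 0"
      using tfun_nonneg[OF \<alpha>_pos \<kappa>_pos l1_pos] \<mu>_nonneg by simp
    ultimately show False by simp
  qed
  obtain \<rho> where HH1: "\<rho> > 0 \<and> (\<exists>\<epsilon>0>0. \<forall>\<epsilon>. 0 < \<epsilon> \<and> \<epsilon> < \<epsilon>0 \<longrightarrow> (\<exists>\<omega>>0.
     \<forall>(Pp::'h) q V T v th. l1*(norm v)^2 \<le> (norm V)^2 \<longrightarrow> l1*(norm th)^2 \<le> (norm T)^2 \<longrightarrow>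
       Ldot \<alpha> \<gamma> \<kappa> \<eta> (\<gamma> - \<alpha> * \<beta>) \<rho> \<epsilon> Pp q V T v th + \<omega> * Edot Pp q V th \<le> 0))"
    using main_ineq[OF \<alpha>_pos \<gamma>_pos \<kappa>_pos l1_pos \<mu>_nonneg \<eta>_big, where 'h='h] by (elim exE) (rule that)
  note \<rho>0 = HH1[THEN conjunct1]
  obtain \<epsilon>0 where HH2: "\<epsilon>0 > 0 \<and> (\<forall>\<epsilon>. 0 < \<epsilon> \<and> \<epsilon> < \<epsilon>0 \<longrightarrow> (\<exists>\<omega>>0.
     \<forall>(Pp::'h) q V T v th. l1*(norm v)^2 \<le> (norm V)^2 \<longrightarrow> l1*(norm th)^2 \<le> (norm T)^2 \<longrightarrow>
       Ldot \<alpha> \<gamma> \<kappa> \<eta> (\<gamma> - \<alpha> * \<beta>) \<rho> \<epsilon> Pp q V T v th + \<omega> * Edot Pp q V th \<le> 0))"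
    using HH1[THEN conjunct2] by (elim exE) (rule that)
  note \<epsilon>00 = HH2[THEN conjunct1]
  note H2 = HH2[THEN conjunct2]
  show ?thesis
  proof (rule exI[of _ \<rho>], intro conjI \<rho>0, rule exI[of _ \<epsilon>0], intro conjI \<epsilon>00 allI impI)
    fix \<epsilon> :: real assume \<epsilon>: "0 < \<epsilon> \<and> \<epsilon> < \<epsilon>0"
    obtain \<omega> where HH3: "\<omega> > 0 \<and> (\<forall>(Pp::'h) q V T v th. l1*(norm v)^2 \<le> (norm V)^2 \<longrightarrow> l1*(norm th)^2 \<le> (norm T)^2 \<longrightarrow>
       Ldot \<alpha> \<gamma> \<kappa> \<eta> (\<gamma> - \<alpha> * \<beta>) \<rho> \<epsilon> Pp q V T v th + \<omega> * Edot Pp q V th \<le> 0)"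
      using H2[rule_format, OF \<epsilon>] by (elim exE) (rule that)
    note \<omega>0 = HH3[THEN conjunct1]
    note Bd = HH3[THEN conjunct2]
    show "\<exists>\<omega>>0. \<forall>u v w th. regular_solution DA A DS S \<alpha> \<beta> \<gamma> \<kappa> \<eta> u v w th \<longrightarrow>
        (\<forall>t\<ge>0. \<exists>L'.
           ((\<lambda>s. Lfun DS S \<alpha> \<beta> \<gamma> \<eta> \<rho> \<epsilon> (u s) (v s) (w s) (th s)) has_real_derivative L')
              (at t within {0..}) \<and>
           L' + \<omega> * Efun S \<alpha> (u t) (v t) (w t) (th t) \<le> 0)"
    proof (rule exI[of _ \<omega>], intro conjI \<omega>0 allI impI)
      fix u v w th :: "real \<Rightarrow> 'h" and t :: real
      assume rs: "regular_solution DA A DS S \<alpha> \<beta> \<gamma> \<kappa> \<eta> u v w th" and t0: "t \<ge> 0"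
      note R = reg_solD[OF rs]
      have uS: "\<And>s. s \<ge> 0 \<Longrightarrow> u s \<in> DS" and vS: "\<And>s. s \<ge> 0 \<Longrightarrow> v s \<in> DS"
        and wS: "\<And>s. s \<ge> 0 \<Longrightarrow> w s \<in> DS" using R(1-3) by auto
      have z1A: "\<And>s. s \<ge> 0 \<Longrightarrow> \<beta> *\<^sub>R v s + \<gamma> *\<^sub>R u s - \<eta> *\<^sub>R th s \<in> DA" using R(4) by auto
      have z2A: "\<And>s. s \<ge> 0 \<Longrightarrow> \<kappa> *\<^sub>R th s + \<eta> *\<^sub>R w s + (\<alpha> * \<eta>) *\<^sub>R v s \<in> DA" using R(5) by auto
      have thS: "\<And>s. s \<ge> 0 \<Longrightarrow> th s \<in> DS"
      proof -
        fix s :: real assume s: "s \<ge> 0"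
        have "\<beta> *\<^sub>R v s + \<gamma> *\<^sub>R u s \<in> DS" using sub uS[OF s] vS[OF s] by (simp add: subspace_add subspace_scale)
        moreover have "\<beta> *\<^sub>R v s + \<gamma> *\<^sub>R u s - \<eta> *\<^sub>R th s \<in> DS" using DAS(1)[OF z1A[OF s]] .
        ultimately have "(\<beta> *\<^sub>R v s + \<gamma> *\<^sub>R u s) - (\<beta> *\<^sub>R v s + \<gamma> *\<^sub>R u s - \<eta> *\<^sub>R th s) \<in> DS"
          by (rule subspace_diff[OF sub])
        then have "\<eta> *\<^sub>R th s \<in> DS" by simp
        then have "(1/\<eta>) *\<^sub>R (\<eta> *\<^sub>R th s) \<in> DS" by (rule subspace_scale[OF sub])
        then show "th s \<in> DS" using \<eta>0 by simp
      qed
      define oi where "oi = op_inv DS S"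
      have blo: "bounded_linear oi" unfolding oi_def by (rule SF(4))
      have oiS: "\<And>y. oi y \<in> DS" "\<And>y. S (oi y) = y" using SF(2) unfolding oi_def by auto
      have oiSx: "\<And>x. x \<in> DS \<Longrightarrow> oi (S x) = x" using SF(3) unfolding oi_def by auto
      have Slin_comb: "\<And>x y p q. x \<in> DS \<Longrightarrow> y \<in> DS \<Longrightarrow> S (p *\<^sub>R x + q *\<^sub>R y) = p *\<^sub>R S x + q *\<^sub>R S y"
      proof -
        fix x y p q assume x: "x \<in> DS" and y: "y \<in> DS"
        have "p *\<^sub>R x \<in> DS" "q *\<^sub>R y \<in> DS" using x y sub by (simp_all add: subspace_scale)
        then show "S (p *\<^sub>R x + q *\<^sub>R y) = p *\<^sub>R S x + q *\<^sub>R S y" using L(2) L(3) x y by simp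
      qed
      have Sadd: "\<And>x y. x \<in> DS \<Longrightarrow> y \<in> DS \<Longrightarrow> S (x + y) = S x + S y" by (rule L(2))
      have Sdiff: "\<And>x y. x \<in> DS \<Longrightarrow> y \<in> DS \<Longrightarrow> S (x - y) = S x - S y" by (rule L(4))
      have Sscale: "\<And>x c. x \<in> DS \<Longrightarrow> S (c *\<^sub>R x) = c *\<^sub>R S x" by (rule L(3))
      have inS: "\<And>x y c. x \<in> DS \<Longrightarrow> y \<in> DS \<Longrightarrow> x + y \<in> DS \<and> x - y \<in> DS \<and> c *\<^sub>R x \<in> DS"
        using sub by (simp add: subspace_add subspace_diff subspace_scale)
      define a where "a = S (u t)"
      define b where "b = S (v t)"
      define c where "c = S (w t)"
      define d where "d = S (th t)"
      define z1 where "z1 = \<beta> *\<^sub>R v t + \<gamma> *\<^sub>R u t - \<eta> *\<^sub>R th t"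
      define z2 where "z2 = \<kappa> *\<^sub>R th t + \<eta> *\<^sub>R w t + (\<alpha> * \<eta>) *\<^sub>R v t"
      define W1 where "W1 = - (\<alpha> *\<^sub>R w t) - A z1"
      define Th1 where "Th1 = - A z2"
      have u0: "u t \<in> DS" and v0: "v t \<in> DS" and w0: "w t \<in> DS" and h0: "th t \<in> DS"
        using uS vS wS thS t0 by auto
      have z1A: "z1 \<in> DA" unfolding z1_def using R(4)[OF t0] .
      have z2A: "z2 \<in> DA" unfolding z2_def using R(5)[OF t0] .
      have Sz1: "S z1 = \<beta> *\<^sub>R b + \<gamma> *\<^sub>R a - \<eta> *\<^sub>R d"
      proof -
        have "\<beta> *\<^sub>R v t + \<gamma> *\<^sub>R u t \<in> DS" "\<eta> *\<^sub>R th t \<in> DS" using inS u0 v0 h0 by blast+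
        then have "S z1 = S (\<beta> *\<^sub>R v t + \<gamma> *\<^sub>R u t) - S (\<eta> *\<^sub>R th t)" unfolding z1_def by (rule Sdiff)
        then show ?thesis using Slin_comb[OF v0 u0] Sscale[OF h0] by (simp add: a_def b_def d_def)
      qed
      have Sz2: "S z2 = \<kappa> *\<^sub>R d + \<eta> *\<^sub>R c + (\<alpha> * \<eta>) *\<^sub>R b"
      proof -
        have "\<kappa> *\<^sub>R th t + \<eta> *\<^sub>R w t \<in> DS" "(\<alpha> * \<eta>) *\<^sub>R v t \<in> DS" using inS h0 w0 v0 by blast+
        then have "S z2 = S (\<kappa> *\<^sub>R th t + \<eta> *\<^sub>R w t) + S ((\<alpha> * \<eta>) *\<^sub>R v t)" unfolding z2_def by (rule Sadd)
        then show ?thesis using Slin_comb[OF h0 w0] Sscale[OF v0] by (simp add: c_def b_def d_def)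
      qed
      have Az1: "A z1 = S (S z1)" using S_sq z1A by blast
      have Az2: "A z2 = S (S z2)" using S_sq z2A by blast
      have Sz1S: "S z1 \<in> DS" and Sz2S: "S z2 \<in> DS" and z2S: "z2 \<in> DS" using DAS z1A z2A by auto
      have W1e: "W1 + \<alpha> *\<^sub>R w t = - A z1" by (simp add: W1_def)
      have qS: "w t + \<alpha> *\<^sub>R v t \<in> DS" using inS w0 v0 by blast
      have gS: "v t - \<alpha> *\<^sub>R u t \<in> DS" using inS v0 u0 by blast
      have Sq: "S (w t + \<alpha> *\<^sub>R v t) = c + \<alpha> *\<^sub>R b"
        using Sadd[OF w0] Sscale[OF v0] inS v0 by (simp add: b_def c_def)
      have Sg: "S (v t - \<alpha> *\<^sub>R u t) = b - \<alpha> *\<^sub>R a"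
        using Sdiff[OF v0] Sscale[OF u0] inS u0 by (simp add: a_def b_def)
      have Sp: "S (v t + \<alpha> *\<^sub>R u t) = b + \<alpha> *\<^sub>R a"
        using Sadd[OF v0] Sscale[OF u0] inS u0 by (simp add: a_def b_def)
      have F1: "inner (w t + \<alpha> *\<^sub>R v t) (W1 + \<alpha> *\<^sub>R w t) = - inner (c + \<alpha> *\<^sub>R b) (\<beta> *\<^sub>R b + \<gamma> *\<^sub>R a - \<eta> *\<^sub>R d)"
        unfolding W1e Az1 using Ssym[OF qS Sz1S] Sq Sz1 by simp
      have F5: "inner (v t - \<alpha> *\<^sub>R u t) (W1 + \<alpha> *\<^sub>R w t) = - inner (b - \<alpha> *\<^sub>R a) (\<beta> *\<^sub>R b + \<gamma> *\<^sub>R a - \<eta> *\<^sub>R d)"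
        unfolding W1e Az1 using Ssym[OF gS Sz1S] Sg Sz1 by simp
      have F2: "inner (th t) Th1 = - inner d (\<kappa> *\<^sub>R d + \<eta> *\<^sub>R c + (\<alpha> * \<eta>) *\<^sub>R b)"
        unfolding Th1_def Az2 using Ssym[OF h0 Sz2S] Sz2 by (simp add: d_def)
      have F3: "inner Th1 (v t) = - inner (\<kappa> *\<^sub>R d + \<eta> *\<^sub>R c + (\<alpha> * \<eta>) *\<^sub>R b) b"
        unfolding Th1_def Az2 using Ssym[OF Sz2S v0] Sz2 by (simp add: b_def)
      have F4: "inner (oi (th t)) (oi Th1) = - inner (th t) (\<kappa> *\<^sub>R th t + \<eta> *\<^sub>R w t + (\<alpha> * \<eta>) *\<^sub>R v t)"
      proof -
        have mS: "- S z2 \<in> DS" using inS[OF Sz2S Sz2S, of "-1"] by simp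
        have "S (- S z2) = - S (S z2)" using Sscale[OF Sz2S, of "-1"] by simp
        then have "oi Th1 = - S z2" unfolding Th1_def Az2 using oiSx[OF mS] by simp
        then have "inner (oi (th t)) (oi Th1) = - inner (oi (th t)) (S z2)" by simp
        also have "\<dots> = - inner (S (oi (th t))) z2" using Ssym[OF oiS(1) z2S] by simp
        also have "\<dots> = - inner (th t) z2" using oiS(2) by simp
        finally show ?thesis by (simp add: z2_def)
      qed
      note dSu = R(7)[OF t0] and dSv = R(9)[OF t0] and du = R(6)[OF t0] and dv = R(8)[OF t0]
      have dw: "(w has_vector_derivative W1) (at t within {0..})" unfolding W1_def z1_def using R(10)[OF t0] .
      have dth: "(th has_vector_derivative Th1) (at t within {0..})" unfolding Th1_def z2_def using R(11)[OF t0] .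
      have doi: "((\<lambda>s. oi (th s)) has_vector_derivative oi Th1) (at t within {0..})"
        by (rule bounded_linear.has_vector_derivative[OF blo dth])
      have dP: "((\<lambda>s. S (v s) + \<alpha> *\<^sub>R S (u s)) has_vector_derivative (c + \<alpha> *\<^sub>R b)) (at t within {0..})"
        unfolding b_def c_def by (intro has_vector_derivative_add dSv vd_cscale dSu)
      have dQ: "((\<lambda>s. w s + \<alpha> *\<^sub>R v s) has_vector_derivative (W1 + \<alpha> *\<^sub>R w t)) (at t within {0..})"
        by (intro has_vector_derivative_add dw vd_cscale dv)
      have dG: "((\<lambda>s. v s - \<alpha> *\<^sub>R u s) has_vector_derivative (w t - \<alpha> *\<^sub>R v t)) (at t within {0..})"
        by (intro has_vector_derivative_diff dv vd_cscale du)
      have dN1: "((\<lambda>s. (norm (S (v s) + \<alpha> *\<^sub>R S (u s)))^2) has_real_derivative 2*inner (b + \<alpha> *\<^sub>R a) (c + \<alpha> *\<^sub>R b)) (at t within {0..})"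
        using norm2_vd[OF dP] by (simp add: a_def b_def)
      have dN2: "((\<lambda>s. (norm (w s + \<alpha> *\<^sub>R v s))^2) has_real_derivative 2*inner (w t + \<alpha> *\<^sub>R v t) (W1 + \<alpha> *\<^sub>R w t)) (at t within {0..})"
        using norm2_vd[OF dQ] by simp
      have dN3: "((\<lambda>s. (norm (S (v s)))^2) has_real_derivative 2*inner b c) (at t within {0..})"
        using norm2_vd[OF dSv] by (simp add: b_def c_def)
      have dN4: "((\<lambda>s. (norm (th s))^2) has_real_derivative 2*inner (th t) Th1) (at t within {0..})"
        using norm2_vd[OF dth] by simp
      have dI5: "((\<lambda>s. inner (th s) (v s)) has_real_derivative (inner Th1 (v t) + inner (th t) (w t))) (at t within {0..})"
        by (rule inner_vd[OF dth dv])
      have dN6: "((\<lambda>s. (norm (oi (th s)))^2) has_real_derivative 2*inner (oi (th t)) (oi Th1)) (at t within {0..})"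
        using norm2_vd[OF doi] by simp
      have dI7: "((\<lambda>s. inner (v s - \<alpha> *\<^sub>R u s) (w s + \<alpha> *\<^sub>R v s)) has_real_derivative
           (inner (w t - \<alpha> *\<^sub>R v t) (w t + \<alpha> *\<^sub>R v t) + inner (v t - \<alpha> *\<^sub>R u t) (W1 + \<alpha> *\<^sub>R w t))) (at t within {0..})"
        by (rule inner_vd[OF dG dQ])
      define Lalt where "Lalt = (\<lambda>s. \<gamma>/\<alpha> * (norm (S (v s) + \<alpha> *\<^sub>R S (u s)))^2 + (norm (w s + \<alpha> *\<^sub>R v s))^2
          - (\<gamma> - \<alpha>*\<beta>)/\<alpha> * (norm (S (v s)))^2 + (norm (th s))^2
          + \<rho> * (\<eta> * inner (th s) (v s) + \<eta>^2/2 * (norm (S (v s)))^2 + 1/2 * (norm (oi (th s)))^2)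
          + \<epsilon>^2 * (- inner (v s - \<alpha> *\<^sub>R u s) (w s + \<alpha> *\<^sub>R v s)))"
      define Draw where "Draw = \<gamma>/\<alpha> * (2*inner (b + \<alpha> *\<^sub>R a) (c + \<alpha> *\<^sub>R b)) + 2*inner (w t + \<alpha> *\<^sub>R v t) (W1 + \<alpha> *\<^sub>R w t)
          - (\<gamma> - \<alpha>*\<beta>)/\<alpha> * (2*inner b c) + 2*inner (th t) Th1
          + \<rho> * (\<eta> * (inner Th1 (v t) + inner (th t) (w t)) + \<eta>^2/2 * (2*inner b c) + 1/2 * (2*inner (oi (th t)) (oi Th1)))
          + \<epsilon>^2 * (- (inner (w t - \<alpha> *\<^sub>R v t) (w t + \<alpha> *\<^sub>R v t) + inner (v t - \<alpha> *\<^sub>R u t) (W1 + \<alpha> *\<^sub>R w t)))"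
      have dL: "(Lalt has_real_derivative Draw) (at t within {0..})"
        unfolding Lalt_def Draw_def
        by (intro DERIV_add DERIV_diff DERIV_cmult DERIV_minus dN1 dN2 dN3 dN4 dI5 dN6 dI7)
      have LL: "\<And>s. s \<in> {0..} \<Longrightarrow> Lalt s = Lfun DS S \<alpha> \<beta> \<gamma> \<eta> \<rho> \<epsilon> (u s) (v s) (w s) (th s)"
      proof -
        fix s :: real assume "s \<in> {0..}"
        then have s: "s \<ge> 0" by simp
        have "S (v s + \<alpha> *\<^sub>R u s) = S (v s) + \<alpha> *\<^sub>R S (u s)"
          using Sadd[OF vS[OF s]] Sscale[OF uS[OF s]] inS uS[OF s] by simp
        then show "Lalt s = Lfun DS S \<alpha> \<beta> \<gamma> \<eta> \<rho> \<epsilon> (u s) (v s) (w s) (th s)"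
          unfolding Lalt_def Lfun_def Wfun_def Ffun_def Gfun_def oi_def by simp
      qed
      have dLf: "((\<lambda>s. Lfun DS S \<alpha> \<beta> \<gamma> \<eta> \<rho> \<epsilon> (u s) (v s) (w s) (th s)) has_real_derivative Draw) (at t within {0..})"
        by (rule has_field_derivative_transform_within[OF dL zero_less_one]) (use t0 LL in auto)
      have Deq: "Draw = Ldot \<alpha> \<gamma> \<kappa> \<eta> (\<gamma> - \<alpha>*\<beta>) \<rho> \<epsilon> (b + \<alpha> *\<^sub>R a) (w t + \<alpha> *\<^sub>R v t) b d (v t) (th t)"
      proof -
        have "Draw = \<gamma>/\<alpha>*(2*inner (b + \<alpha> *\<^sub>R a) (c + \<alpha> *\<^sub>R b))
     + 2*(-inner (c + \<alpha> *\<^sub>R b) (\<beta> *\<^sub>R b + \<gamma> *\<^sub>R a - \<eta> *\<^sub>R d))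
     - (\<gamma> - \<alpha>*\<beta>)/\<alpha>*(2*inner b c)
     + 2*(-inner d (\<kappa> *\<^sub>R d + \<eta> *\<^sub>R c + (\<alpha>*\<eta>) *\<^sub>R b))
     + \<rho>*(\<eta>*(-inner (\<kappa> *\<^sub>R d + \<eta> *\<^sub>R c + (\<alpha>*\<eta>) *\<^sub>R b) b + inner (th t) (w t)) + \<eta>^2/2*(2*inner b c)
            + 1/2*(2*(-inner (th t) (\<kappa> *\<^sub>R th t + \<eta> *\<^sub>R w t + (\<alpha>*\<eta>) *\<^sub>R v t))))
     + \<epsilon>^2*(-(inner (w t - \<alpha> *\<^sub>R v t) (w t + \<alpha> *\<^sub>R v t) + -inner (b - \<alpha> *\<^sub>R a) (\<beta> *\<^sub>R b + \<gamma> *\<^sub>R a - \<eta> *\<^sub>R d)))"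
          unfolding Draw_def F1 F2 F3 F4 F5 ..
        also have "\<dots> = Ldot \<alpha> \<gamma> \<kappa> \<eta> (\<gamma> - \<alpha>*\<beta>) \<rho> \<epsilon> (b + \<alpha> *\<^sub>R a) (w t + \<alpha> *\<^sub>R v t) b d (v t) (th t)"
          by (rule deriv_identity) (use \<alpha>_pos in simp)
        finally show ?thesis .
      qed
      have Eeq: "Efun S \<alpha> (u t) (v t) (w t) (th t) = Edot (b + \<alpha> *\<^sub>R a) (w t + \<alpha> *\<^sub>R v t) b (th t)"
        unfolding Efun_def Edot_def Sp by (simp add: b_def)
      have P1: "l1*(norm (v t))^2 \<le> (norm b)^2" using SF(1) v0 by (simp add: b_def)
      have P2: "l1*(norm (th t))^2 \<le> (norm d)^2" using SF(1) h0 by (simp add: d_def)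
      have fin: "Draw + \<omega> * Efun S \<alpha> (u t) (v t) (w t) (th t) \<le> 0"
        unfolding Deq Eeq using Bd P1 P2 by blast
      show "\<exists>L'. ((\<lambda>s. Lfun DS S \<alpha> \<beta> \<gamma> \<eta> \<rho> \<epsilon> (u s) (v s) (w s) (th s)) has_real_derivative L')
              (at t within {0..}) \<and> L' + \<omega> * Efun S \<alpha> (u t) (v t) (w t) (th t) \<le> 0"
        using dLf fin by blast
    qed
  qed
qed

end
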